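(* Let $p\in\{2,3\}$, and let \[ F(z) = {}_{2}F_{1} \left( \tfrac{1}{6}, \tfrac{5}{6} ; 1 ; 432z \right) = \sum_{m=0}^{\infty} A(m) z^{m}, \qquad F_{s}(z) = \sum_{m=0}^{p^{s}-1} A(m) z^{m}, \] where $A(m) = \frac{(6m)!}{(3m)!(2m)!m!} = \binom{3m}{m}\binom{6m}{3m}$. Then for every $s \in \mathbb{Z}_{\ge0}$ and $n\ge0$, \[ \frac{F(z)}{F(z^{p})} \equiv \frac{F_{s+1}(z)}{F_{s}(z^{p})} \pmod{p^{s+1}}, \qquad \frac{F^{(n)}(z)}{F(z)} \equiv \frac{F^{(n)}_{s+1}(z)}{F_{s+1}(z)} \pmod{p^{s+1}} , \] where $F^{(n)}$ denotes the $n$-th derivative.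
   Context: ${}_2F_1(a,b;c;z)=\sum_{m\ge0}\frac{(a)_m(b)_m}{(c)_m m!}z^m$. All series involved lie in $\mathbb{Z}[\![z]\!]$ with constant term 1 (hence are invertible); a congruence modulo $p^{s+1}$ means all coefficients of the difference are divisible by $p^{s+1}$. *)

theory Defs
  imports "HOL-Computational_Algebra.Formal_Power_Series"
begin

definition hyp2F1 :: "rat \<Rightarrow> rat \<Rightarrow> rat \<Rightarrow> rat fps" where
  "hyp2F1 a b c = Abs_fps (\<lambda>m. pochhammer a m * pochhammer b m / (pochhammer c m * fact m))"

definition fps_scale :: "rat \<Rightarrow> rat fps \<Rightarrow> rat fps" where
  "fps_scale w f = Abs_fps (\<lambda>m. w ^ m * fps_nth f m)"

definition F :: "rat fps" where
  "F = fps_scale 432 (hyp2F1 (1/6) (5/6) 1)"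

definition A :: "nat \<Rightarrow> nat" where
  "A m = fact (6*m) div (fact (3*m) * fact (2*m) * fact m)"

definition Ftr :: "nat \<Rightarrow> nat \<Rightarrow> rat fps" where
  "Ftr p s = Abs_fps (\<lambda>m. if m < p ^ s then of_nat (A m) else 0)"

definition fps_cong :: "int \<Rightarrow> rat fps \<Rightarrow> rat fps \<Rightarrow> bool" where
  "fps_cong M f g \<longleftrightarrow> (\<forall>k. \<exists>c::int. fps_nth (f - g) k = of_int (M * c))"

end

theory Submission
  imports Defs "HOL-Computational_Algebra.Primes"
begin

unbundle fps_syntax

definition zp :: "nat \<Rightarrow> rat \<Rightarrow> bool" where
  "zp p x \<longleftrightarrow> (\<exists>a b::int. b \<noteq> 0 \<and> coprime b (int p) \<and> x = of_int a / of_int b)"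

definition pc :: "nat \<Rightarrow> nat \<Rightarrow> rat \<Rightarrow> bool" where
  "pc p k x \<longleftrightarrow> zp p (x / of_nat p ^ k)"

lemma zp_int[simp]: "zp p (of_int a)"
  unfolding zp_def by (rule exI[of _ a], rule exI[of _ 1]) simp

lemma zp_nat[simp]: "zp p (of_nat a)"
  using zp_int[of p "int a"] by simp

lemma zp_0[simp]: "zp p 0" and zp_1[simp]: "zp p 1"
  using zp_int[of p 0] zp_int[of p 1] by simp_all

lemma zp_div: "b \<noteq> 0 \<Longrightarrow> coprime b (int p) \<Longrightarrow> zp p (of_int a / of_int b)"
  unfolding zp_def by blast

lemma zp_add: assumes "zp p x" "zp p y" shows "zp p (x + y)"
proof -
  obtain a b c d where ab: "b \<noteq> 0" "coprime b (int p)" "x = of_int a / of_int b"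
    and cd: "d \<noteq> 0" "coprime d (int p)" "y = of_int c / of_int d" using assms unfolding zp_def by blast
  have "x + y = of_int (a*d + c*b) / of_int (b*d)" using ab cd by (simp add: field_simps)
  moreover have "coprime (b*d) (int p)" using ab cd by simp
  ultimately show ?thesis using ab cd unfolding zp_def by (metis mult_eq_0_iff)
qed

lemma zp_mult: assumes "zp p x" "zp p y" shows "zp p (x * y)"
proof -
  obtain a b c d where ab: "b \<noteq> 0" "coprime b (int p)" "x = of_int a / of_int b"
    and cd: "d \<noteq> 0" "coprime d (int p)" "y = of_int c / of_int d" using assms unfolding zp_def by blast
  have "x * y = of_int (a*c) / of_int (b*d)" using ab cd by (simp add: field_simps)
  moreover have "coprime (b*d) (int p)" using ab cd by simp
  ultimately show ?thesis using ab cd unfolding zp_def by (metis mult_eq_0_iff)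
qed

lemma zp_uminus: assumes "zp p x" shows "zp p (- x)"
  using zp_mult[OF zp_int[of p "-1"] assms] by simp

lemma zp_diff: assumes "zp p x" "zp p y" shows "zp p (x - y)"
  using zp_add[OF assms(1) zp_uminus[OF assms(2)]] by simp

lemma zp_sum: "(\<And>i. i \<in> I \<Longrightarrow> zp p (f i)) \<Longrightarrow> zp p (sum f I)"
  by (induction I rule: infinite_finite_induct) (auto intro: zp_add)

lemma zp_prod: "(\<And>i. i \<in> I \<Longrightarrow> zp p (f i)) \<Longrightarrow> zp p (prod f I)"
  by (induction I rule: infinite_finite_induct) (auto intro: zp_mult)

lemma zp_pow: "zp p x \<Longrightarrow> zp p (x ^ n)"
  by (induction n) (auto intro: zp_mult)

lemma pc_0[simp]: "pc p k 0" unfolding pc_def by simp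

lemma pc_zero: "zp p x \<Longrightarrow> pc p 0 x" unfolding pc_def by simp

lemma pc_add: "pc p k x \<Longrightarrow> pc p k y \<Longrightarrow> pc p k (x + y)"
  unfolding pc_def by (metis add_divide_distrib zp_add)

lemma pc_diff: "pc p k x \<Longrightarrow> pc p k y \<Longrightarrow> pc p k (x - y)"
  unfolding pc_def by (metis diff_divide_distrib zp_diff)

lemma pc_uminus: "pc p k x \<Longrightarrow> pc p k (- x)"
  unfolding pc_def by (metis minus_divide_left zp_uminus)

lemma pc_sum: "(\<And>i. i \<in> I \<Longrightarrow> pc p k (f i)) \<Longrightarrow> pc p k (sum f I)"
  by (induction I rule: infinite_finite_induct) (auto intro: pc_add)

lemma pc_mult_left: "zp p c \<Longrightarrow> pc p k x \<Longrightarrow> pc p k (c * x)"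
  unfolding pc_def by (metis times_divide_eq_right zp_mult)

lemma pc_mult_right: "zp p c \<Longrightarrow> pc p k x \<Longrightarrow> pc p k (x * c)"
  using pc_mult_left by (metis mult.commute)

lemma pc_mult_p: "p > 0 \<Longrightarrow> pc p k x \<Longrightarrow> pc p (Suc k) (of_nat p * x)"
  unfolding pc_def by simp

lemma pc_mult_pow: "p > 0 \<Longrightarrow> zp p x \<Longrightarrow> pc p k (of_nat p ^ k * x)"
  unfolding pc_def by simp

lemma pc_mono: assumes "pc p k x" "j \<le> k" "p > 0" shows "pc p j x"
proof -
  have e: "(of_nat p ^ k :: rat) = of_nat p ^ j * of_nat p ^ (k - j)"
    using assms(2) by (simp add: power_add[symmetric])
  have "x / of_nat p ^ j = of_nat p ^ (k - j) * (x / of_nat p ^ k)"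
    using assms(3) by (simp add: e field_simps)
  then show ?thesis using assms(1) unfolding pc_def
    by (metis zp_mult zp_nat of_nat_power)
qed

lemma pc_Suc: "pc p (Suc k) x \<Longrightarrow> p > 0 \<Longrightarrow> pc p k x" using pc_mono by fastforce

lemma pc_mult: "pc p j x \<Longrightarrow> pc p k y \<Longrightarrow> pc p (j + k) (x * y)"
  unfolding pc_def by (metis (no_types, lifting) power_add times_divide_times_eq zp_mult)

lemma pc_int: assumes "p > 0" "int p ^ k dvd a" shows "pc p k (of_int a)"
proof -
  obtain c where "a = int p ^ k * c" using assms(2) by (metis dvdE)
  then show ?thesis unfolding pc_def using assms(1) by simp
qed

lemma pc_int_dvd: assumes "pc p k (of_int a)" "p > 0" shows "int p ^ k dvd a"
proof -
  obtain c b where cb: "b \<noteq> 0" "coprime b (int p)" "of_int a / of_nat p ^ k = (of_int c / of_int b :: rat)"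
    using assms unfolding pc_def zp_def by blast
  show ?thesis
  proof -
    have "of_int (a * b) = (of_int (c * int p ^ k) :: rat)" using cb assms(2)
      by (simp add: divide_eq_eq mult.commute mult.left_commute)
    then have e: "a * b = c * int p ^ k" by (simp only: of_int_eq_iff)
    have "coprime (int p ^ k) b" using cb by (simp add: coprime_commute)
    moreover have "int p ^ k dvd a * b" using e by simp
    ultimately show ?thesis using coprime_dvd_mult_left_iff by blast
  qed
qed

fun gs :: "nat \<Rightarrow> nat \<Rightarrow> nat" where
  "gs p 0 = 1"
| "gs p (Suc n) = gs p n * (if p dvd Suc n then 1 else Suc n)"

lemma gs_pos: "gs p n > 0"
  by (induction n) auto

lemma gs_coprime: assumes "prime p" shows "coprime (gs p n) p"
proof (induction n)
  case 0 then show ?case by simp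
next
  case (Suc n)
  have "coprime (if p dvd Suc n then 1 else Suc n) p"
    using assms by (auto simp: coprime_commute prime_imp_coprime)
  then show ?case using Suc by simp
qed

lemma factdec: assumes "p > 0" shows "(fact N :: nat) = p ^ (N div p) * fact (N div p) * gs p N"
proof (induction N)
  case 0 then show ?case by simp
next
  case (Suc N)
  show ?case
  proof (cases "p dvd Suc N")
    case True
    then have d1: "Suc N div p = Suc (N div p)" by (simp add: div_Suc)
    have e: "Suc N = p * Suc (N div p)" using True d1 by (metis dvd_mult_div_cancel)
    have "(fact (Suc N) :: nat) = Suc N * (p ^ (N div p) * fact (N div p) * gs p N)" using Suc by simp
    also have "\<dots> = p ^ Suc (N div p) * fact (Suc (N div p)) * gs p (Suc N)"
      using True by (subst e) (simp add: algebra_simps)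
    finally show ?thesis using d1 by simp
  next
    case False
    then have d: "Suc N div p = N div p" by (simp add: div_Suc dvd_eq_mod_eq_0)
    show ?thesis using Suc False d by (simp add: algebra_simps)
  qed
qed


lemma gs_shift_factor:
  fixes p n t :: nat
  assumes "p > 0"
  shows "(if p dvd (n + p ^ t) then 1 else n + p ^ t) mod p ^ t = (if p dvd n then 1 else n) mod p ^ t"
proof (cases t)
  case 0 then show ?thesis by simp
next
  case (Suc t')
  then have "p dvd p ^ t" by simp
  then have "p dvd (n + p ^ t) \<longleftrightarrow> p dvd n" by (simp add: dvd_add_left_iff)
  then show ?thesis by simp
qed

lemma gs_block: assumes "p > 0"
  shows "gs p (n + p ^ t) mod p ^ t = (gs p n * gs p (p ^ t)) mod p ^ t"
proof (induction n)
  case 0 then show ?case by simp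
next
  case (Suc n)
  have "gs p (Suc n + p ^ t) = gs p (n + p ^ t) * (if p dvd (Suc n + p ^ t) then 1 else Suc n + p ^ t)"
    by simp
  then have "gs p (Suc n + p ^ t) mod p ^ t = ((gs p n * gs p (p ^ t)) * (if p dvd Suc n then 1 else Suc n)) mod p ^ t"
    using Suc gs_shift_factor[OF assms, of "Suc n" t] by (metis mod_mult_cong)
  then show ?case by (simp add: algebra_simps)
qed

lemma gs_blocks: assumes "p > 0"
  shows "gs p (n + L * p ^ t) mod p ^ t = (gs p n * gs p (p ^ t) ^ L) mod p ^ t"
proof (induction L)
  case 0 then show ?case by simp
next
  case (Suc L)
  have "gs p (n + Suc L * p ^ t) = gs p ((n + L * p ^ t) + p ^ t)" by (simp add: algebra_simps)
  then have "gs p (n + Suc L * p ^ t) mod p ^ t = (gs p (n + L * p ^ t) * gs p (p ^ t)) mod p ^ t"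
    using gs_block[OF assms] by simp
  also have "\<dots> = ((gs p n * gs p (p ^ t) ^ L) * gs p (p ^ t)) mod p ^ t"
    using Suc by (metis mod_mult_cong)
  finally show ?case by (simp add: algebra_simps)
qed

definition G :: "nat \<Rightarrow> nat \<Rightarrow> rat" where
  "G p n = of_nat (gs p (6*n)) / of_nat (gs p (3*n) * gs p (2*n) * gs p n)"

lemma zp_gs_div: assumes "prime p" shows "zp p (of_nat a / of_nat (gs p n))"
proof -
  have "coprime (int (gs p n)) (int p)" using gs_coprime[OF assms] by simp
  moreover have "int (gs p n) \<noteq> 0" using gs_pos[of p n] by simp
  ultimately show ?thesis using zp_div[of "int (gs p n)" p "int a"] by simp
qed

lemma G_zp: assumes "prime p" shows "zp p (G p n)"
proof -
  have "G p n = of_nat (gs p (6*n)) / of_nat (gs p (3*n)) * (1 / of_nat (gs p (2*n))) * (1 / of_nat (gs p n))"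
    unfolding G_def by simp
  then show ?thesis using zp_gs_div[OF assms] by (metis zp_mult of_nat_1)
qed

lemma G_cong: assumes "prime p" shows "pc p t (G p (n + a * p ^ t) - G p n)"
proof -
  have p0: "p > 0" using assms prime_gt_0_nat by blast
  define m where "m = p ^ t"
  define E where "E = gs p (p ^ t)"
  define n' where "n' = n + a * p ^ t"
  have c: "\<And>c. gs p (c * n') mod m = (gs p (c * n) * E ^ (c * a)) mod m"
  proof -
    fix c
    have "c * n' = c * n + (c * a) * p ^ t" unfolding n'_def by (simp add: algebra_simps)
    then show "gs p (c * n') mod m = (gs p (c * n) * E ^ (c * a)) mod m"
      unfolding m_def E_def using gs_blocks[OF p0] by simp
  qed
  have c1: "gs p n' mod m = (gs p n * E ^ a) mod m" using c[of 1] by simp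
  define D where "D = gs p (3*n) * gs p (2*n) * gs p n"
  define D' where "D' = gs p (3*n') * gs p (2*n') * gs p n'"
  have e1: "(gs p (6*n') * D) mod m = ((gs p (6*n) * E ^ (6*a)) * D) mod m"
    by (rule mod_mult_cong[OF c[of 6] refl])
  have e3: "(gs p (3*n') * gs p (2*n')) mod m = ((gs p (3*n) * E ^ (3*a)) * (gs p (2*n) * E ^ (2*a))) mod m"
    by (rule mod_mult_cong[OF c[of 3] c[of 2]])
  have e4: "(gs p (3*n') * gs p (2*n') * gs p n') mod m = ((gs p (3*n) * E ^ (3*a)) * (gs p (2*n) * E ^ (2*a)) * (gs p n * E ^ a)) mod m"
    by (rule mod_mult_cong[OF e3 c1])
  have e2: "(gs p (6*n) * D') mod m = (gs p (6*n) * ((gs p (3*n) * E ^ (3*a)) * (gs p (2*n) * E ^ (2*a)) * (gs p n * E ^ a))) mod m"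
    unfolding D'_def by (rule mod_mult_cong[OF refl e4])
  have "E ^ (6*a) = E ^ (3*a) * E ^ (2*a) * E ^ a"
    by (simp add: power_add[symmetric])
  then have e: "(gs p (6*n') * D) mod m = (gs p (6*n) * D') mod m"
    using e1 e2 unfolding D_def by (simp add: algebra_simps)
  then have "int m dvd int (gs p (6*n') * D) - int (gs p (6*n) * D')"
    by (metis of_nat_mod mod_eq_dvd_iff)
  then obtain k where k: "int (gs p (6*n') * D) - int (gs p (6*n) * D') = int m * k" by blast
  have D0: "D > 0" "D' > 0" unfolding D_def D'_def using gs_pos by simp_all
  have "G p n' - G p n = (of_int (int (gs p (6*n') * D) - int (gs p (6*n) * D'))) / (of_nat D' * of_nat D)"
    unfolding G_def D_def[symmetric] D'_def[symmetric] using D0 by (simp add: field_simps)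
  also have "\<dots> = of_nat p ^ t * (of_int k / of_int (int (D' * D)))"
    using k unfolding m_def by simp
  finally have g: "G p n' - G p n = of_nat p ^ t * (of_int k / of_int (int (D' * D)))" .
  have "coprime (int (D' * D)) (int p)"
    unfolding D_def D'_def using gs_coprime[OF assms] by simp
  then have "zp p (of_int k / of_int (int (D' * D)))" using D0 by (intro zp_div) auto
  then show ?thesis unfolding n'_def[symmetric] g using pc_mult_pow[OF p0] by blast
qed

lemma A_fact: "fact (3*n) * fact (2*n) * fact n * A n = (fact (6*n) :: nat)"
proof -
  have a: "fact (3*n) * fact (6*n - 3*n) * (6*n choose 3*n) = (fact (6*n) :: nat)"
    by (rule binomial_fact_lemma) simp
  have b: "fact n * fact (3*n - n) * (3*n choose n) = (fact (3*n) :: nat)"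
    by (rule binomial_fact_lemma) simp
  have c: "6*n - 3*n = 3*n" "3*n - n = 2*n" by simp_all
  have a': "fact (3*n) * fact (3*n) * (6*n choose 3*n) = (fact (6*n) :: nat)" using a unfolding c .
  have b': "fact n * fact (2*n) * (3*n choose n) = (fact (3*n) :: nat)" using b unfolding c .
  have "(fact (6*n) :: nat) = fact (3*n) * (fact n * fact (2*n) * (3*n choose n)) * (6*n choose 3*n)"
    using a' b' by simp
  then have e: "(fact (6*n) :: nat) = (fact (3*n) * fact (2*n) * fact n) * ((6*n choose 3*n) * (3*n choose n))"
    by (simp add: ac_simps)
  have "A n = (6*n choose 3*n) * (3*n choose n)"
    unfolding A_def e by (simp add: fact_nonzero)
  then show ?thesis using e by simp
qed

lemma A_rat: "(of_nat (A n) :: rat) = fact (6*n) / (fact (3*n) * fact (2*n) * fact n)"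
proof -
  have "(fact (3*n) * fact (2*n) * fact n * of_nat (A n) :: rat) = fact (6*n)"
    using arg_cong[OF A_fact[of n], of "of_nat :: nat \<Rightarrow> rat"] by simp
  then show ?thesis by (simp add: field_simps)
qed

lemma A_pos: "A n > 0"
  using A_fact[of n] by (metis fact_nonzero mult_is_0 neq0_conv)

lemma fact_dig: assumes "p > 0"
  shows "(fact (c*(b+p*x)) :: rat) = of_nat p ^ (c*x + c*b div p) * fact (c*x + c*b div p) * of_nat (gs p (c*(b+p*x)))"
proof -
  have "c*(b+p*x) = c*b + (c*x)*p" by (simp add: algebra_simps)
  then have "c*(b+p*x) div p = c*x + c*b div p"
    using assms by simp
  then have "(fact (c*(b+p*x)) :: nat) = p ^ (c*x + c*b div p) * fact (c*x + c*b div p) * gs p (c*(b+p*x))"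
    using factdec[OF assms, of "c*(b+p*x)"] by simp
  from arg_cong[OF this, of "of_nat :: nat \<Rightarrow> rat"] show ?thesis by simp
qed

lemma fact_p1: "(fact (n+1) :: rat) = fact n * (of_nat n + 1)" by simp
lemma fact_p2: "(fact (n+2) :: rat) = fact n * ((of_nat n + 1) * (of_nat n + 2))"
proof -
  have e: "n + 2 = Suc (n + 1)" by simp
  have "(fact (n+2) :: rat) = of_nat (Suc (n+1)) * fact (n+1)"
    unfolding e by (rule fact_Suc)
  then show ?thesis using fact_p1[of n] by (simp add: algebra_simps)
qed
lemma fact_p3: "(fact (n+3) :: rat) = fact n * ((of_nat n + 1) * (of_nat n + 2) * (of_nat n + 3))"
proof -
  have e: "n + 3 = Suc (n + 2)" by simp
  have "(fact (n+3) :: rat) = of_nat (Suc (n+2)) * fact (n+2)"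
    unfolding e by (rule fact_Suc)
  then show ?thesis using fact_p2[of n] by (simp add: algebra_simps)
qed
lemma fact_p4: "(fact (n+4) :: rat) = fact n * ((of_nat n + 1) * (of_nat n + 2) * (of_nat n + 3) * (of_nat n + 4))"
proof -
  have e: "n + 4 = Suc (n + 3)" by simp
  have "(fact (n+4) :: rat) = of_nat (Suc (n+3)) * fact (n+3)"
    unfolding e by (rule fact_Suc)
  then show ?thesis using fact_p3[of n] by (simp add: algebra_simps)
qed

declare gs.simps(2)[simp del]

lemma rearr4: "((x6::rat)*P6*F6*g6) / ((x3*P3*F3*g3) * (x2*P2*F2*g2) * (x1*P1*F1*g1)) =
   (x6/(x3*x2*x1)) * (P6/(P3*P2*P1)) * (F6/(F3*F2*F1)) * (g6/(g3*g2*g1))"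
  by (simp add: divide_inverse inverse_mult_distrib mult_ac)

lemma rA_21: "(of_nat (A (1 + 2*x)) :: rat) = of_nat (A x) * (12 * (6 * of_nat x + 1) * G 2 (1 + 2*x))"
proof -
  have f: "(fact (c*(1+2*x)) :: rat) = of_nat 2 ^ (c*x + c*1 div 2) * fact (c*x + c*1 div 2) * of_nat (gs 2 (c*(1+2*x)))" for c
    using fact_dig[of 2 c 1 x] by simp
  define P :: rat where "P = 2 ^ x"
  have pw: "(2::rat) ^ (6*x+3) = 8 * P^6" "(2::rat) ^ (3*x+1) = 2 * P^3" "(2::rat) ^ (2*x+1) = 2 * P^2"
      "(2::rat) ^ (1*x+0) = 1 * P"
    unfolding P_def by (simp_all add: power_add power_mult mult.commute)
  have pwc: "(2::rat) ^ (c*x) = P ^ c" "(2::rat) ^ x = P" for c unfolding P_def by (simp_all add: power_mult[symmetric] mult.commute)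
  have P0: "P \<noteq> 0" unfolding P_def by simp
  have x0: "(of_nat x :: rat) + 1 \<noteq> 0" "3 * (of_nat x :: rat) + 1 \<noteq> 0" "2 * (of_nat x :: rat) + 1 \<noteq> 0"
       "3 * (of_nat x :: rat) + 2 \<noteq> 0"
    using of_nat_0_le_iff[of x, where 'a=rat] by linarith+
  have e1: "of_nat (6*x) + (2::rat) = 2 * (3 * of_nat x + 1)" "of_nat (6*x) + (3::rat) = 3 * (2 * of_nat x + 1)"
      "of_nat (6*x) + (4::rat) = 2 * (3 * of_nat x + 2)"
      "of_nat (6*x) + (1::rat) = 6 * of_nat x + 1" "of_nat (3*x) + (1::rat) = 3 * of_nat x + 1"
      "of_nat (3*x) + (2::rat) = 3 * of_nat x + 2"
      "of_nat (2*x) + (1::rat) = 2 * of_nat x + 1"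
    by simp_all
  have "(of_nat (A (1 + 2*x)) :: rat) = fact (6*(1+2*x)) / (fact (3*(1+2*x)) * fact (2*(1+2*x)) * fact (1*(1+2*x)))"
    using A_rat by (metis mult.left_neutral)
  also have "\<dots> = (8 * P^6 * fact (6*x+3) * of_nat (gs 2 (6*(1+2*x)))) /
      ((2 * P^3 * fact (3*x+1) * of_nat (gs 2 (3*(1+2*x)))) * (2 * P^2 * fact (2*x+1) * of_nat (gs 2 (2*(1+2*x))))
        * (1 * P * fact (1*x+0) * of_nat (gs 2 (1*(1+2*x)))))"
    unfolding f[of 6] f[of 3] f[of 2] f[of 1] by (simp add: pw pwc)
  also have "\<dots> = (8/(2*2*1)) * (P^6/(P^3*P^2*P)) * (fact (6*x+3)/(fact (3*x+1)*fact (2*x+1)*fact (1*x+0)))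
       * (of_nat (gs 2 (6*(1+2*x))) / (of_nat (gs 2 (3*(1+2*x))) * of_nat (gs 2 (2*(1+2*x))) * of_nat (gs 2 (1*(1+2*x)))))"
    by (rule rearr4)
  also have "P^6/(P^3*P^2*P) = 1" using P0 by (simp add: eval_nat_numeral)
  also have "fact (6*x+3)/(fact (3*x+1)*fact (2*x+1)*fact (1*x+0)) = (fact (6*x)/(fact (3*x)*fact (2*x)*fact x)) * (6 * (6 * of_nat x + 1) :: rat)"
  proof -
    have "fact (6*x+3)/(fact (3*x+1)*fact (2*x+1)*fact (1*x+0)) =
      (fact (6*x) * ((6 * of_nat x + 1) * (2 * (3 * of_nat x + 1)) * (3 * (2 * of_nat x + 1)))) / ((fact (3*x) * (3 * of_nat x + 1)) * (fact (2*x) * (2 * of_nat x + 1)) * fact x :: rat)"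
      unfolding fact_p1 fact_p3 e1 by simp
    also have "\<dots> = (fact (6*x)/(fact (3*x)*fact (2*x)*fact x)) * (((6 * of_nat x + 1) * (2 * (3 * of_nat x + 1)) * (3 * (2 * of_nat x + 1))) / ((3 * of_nat x + 1) * (2 * of_nat x + 1) * 1))"
      by (simp add: divide_inverse inverse_mult_distrib mult_ac)
    also have "(((6 * of_nat x + 1) * (2 * (3 * of_nat x + 1)) * (3 * (2 * of_nat x + 1))) / ((3 * of_nat x + 1) * (2 * of_nat x + 1) * 1)) = (6 * (6 * of_nat x + 1) :: rat)"
    proof -
      have "(((6 * of_nat x + 1) * (2 * (3 * of_nat x + 1)) * (3 * (2 * of_nat x + 1))) :: rat) = (6 * (6 * of_nat x + 1)) * ((3 * of_nat x + 1) * (2 * of_nat x + 1) * 1)" by (simp add: algebra_simps)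
      moreover have "((3 * of_nat x + 1) * (2 * of_nat x + 1) * 1 :: rat) \<noteq> 0" using x0 by simp
      ultimately show ?thesis by simp
    qed
    finally show ?thesis .
  qed
  finally show ?thesis unfolding A_rat G_def by (simp add: mult_ac)
qed

lemma rA_31: "(of_nat (A (1 + 3*x)) :: rat) = of_nat (A x) * (6 * (6 * of_nat x + 1) * G 3 (1 + 3*x))"
proof -
  have f: "(fact (c*(1+3*x)) :: rat) = of_nat 3 ^ (c*x + c*1 div 3) * fact (c*x + c*1 div 3) * of_nat (gs 3 (c*(1+3*x)))" for c
    using fact_dig[of 3 c 1 x] by simp
  define P :: rat where "P = 3 ^ x"
  have pw: "(3::rat) ^ (6*x+2) = 9 * P^6" "(3::rat) ^ (3*x+1) = 3 * P^3" "(3::rat) ^ (2*x+0) = 1 * P^2"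
      "(3::rat) ^ (1*x+0) = 1 * P"
    unfolding P_def by (simp_all add: power_add power_mult mult.commute)
  have pwc: "(3::rat) ^ (c*x) = P ^ c" "(3::rat) ^ x = P" for c unfolding P_def by (simp_all add: power_mult[symmetric] mult.commute)
  have P0: "P \<noteq> 0" unfolding P_def by simp
  have x0: "(of_nat x :: rat) + 1 \<noteq> 0" "3 * (of_nat x :: rat) + 1 \<noteq> 0" "2 * (of_nat x :: rat) + 1 \<noteq> 0"
       "3 * (of_nat x :: rat) + 2 \<noteq> 0"
    using of_nat_0_le_iff[of x, where 'a=rat] by linarith+
  have e1: "of_nat (6*x) + (2::rat) = 2 * (3 * of_nat x + 1)" "of_nat (6*x) + (3::rat) = 3 * (2 * of_nat x + 1)"
      "of_nat (6*x) + (4::rat) = 2 * (3 * of_nat x + 2)"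
      "of_nat (6*x) + (1::rat) = 6 * of_nat x + 1" "of_nat (3*x) + (1::rat) = 3 * of_nat x + 1"
      "of_nat (3*x) + (2::rat) = 3 * of_nat x + 2"
      "of_nat (2*x) + (1::rat) = 2 * of_nat x + 1"
    by simp_all
  have "(of_nat (A (1 + 3*x)) :: rat) = fact (6*(1+3*x)) / (fact (3*(1+3*x)) * fact (2*(1+3*x)) * fact (1*(1+3*x)))"
    using A_rat by (metis mult.left_neutral)
  also have "\<dots> = (9 * P^6 * fact (6*x+2) * of_nat (gs 3 (6*(1+3*x)))) /
      ((3 * P^3 * fact (3*x+1) * of_nat (gs 3 (3*(1+3*x)))) * (1 * P^2 * fact (2*x+0) * of_nat (gs 3 (2*(1+3*x))))
        * (1 * P * fact (1*x+0) * of_nat (gs 3 (1*(1+3*x)))))"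
    unfolding f[of 6] f[of 3] f[of 2] f[of 1] by (simp add: pw pwc)
  also have "\<dots> = (9/(3*1*1)) * (P^6/(P^3*P^2*P)) * (fact (6*x+2)/(fact (3*x+1)*fact (2*x+0)*fact (1*x+0)))
       * (of_nat (gs 3 (6*(1+3*x))) / (of_nat (gs 3 (3*(1+3*x))) * of_nat (gs 3 (2*(1+3*x))) * of_nat (gs 3 (1*(1+3*x)))))"
    by (rule rearr4)
  also have "P^6/(P^3*P^2*P) = 1" using P0 by (simp add: eval_nat_numeral)
  also have "fact (6*x+2)/(fact (3*x+1)*fact (2*x+0)*fact (1*x+0)) = (fact (6*x)/(fact (3*x)*fact (2*x)*fact x)) * (2 * (6 * of_nat x + 1) :: rat)"
  proof -
    have "fact (6*x+2)/(fact (3*x+1)*fact (2*x+0)*fact (1*x+0)) =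
      (fact (6*x) * ((6 * of_nat x + 1) * (2 * (3 * of_nat x + 1)))) / ((fact (3*x) * (3 * of_nat x + 1)) * (fact (2*x) * 1) * fact x :: rat)"
      unfolding fact_p1 fact_p2 e1 by simp
    also have "\<dots> = (fact (6*x)/(fact (3*x)*fact (2*x)*fact x)) * (((6 * of_nat x + 1) * (2 * (3 * of_nat x + 1))) / ((3 * of_nat x + 1) * 1 * 1))"
      by (simp add: divide_inverse inverse_mult_distrib mult_ac)
    also have "(((6 * of_nat x + 1) * (2 * (3 * of_nat x + 1))) / ((3 * of_nat x + 1) * 1 * 1)) = (2 * (6 * of_nat x + 1) :: rat)"
    proof -
      have "(((6 * of_nat x + 1) * (2 * (3 * of_nat x + 1))) :: rat) = (2 * (6 * of_nat x + 1)) * ((3 * of_nat x + 1) * 1 * 1)" by (simp add: algebra_simps)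
      moreover have "((3 * of_nat x + 1) * 1 * 1 :: rat) \<noteq> 0" using x0 by simp
      ultimately show ?thesis by simp
    qed
    finally show ?thesis .
  qed
  finally show ?thesis unfolding A_rat G_def by (simp add: mult_ac)
qed

lemma rA_32: "(of_nat (A (2 + 3*x)) :: rat) = of_nat (A x) * (36 * (6 * of_nat x + 1) * G 3 (2 + 3*x))"
proof -
  have f: "(fact (c*(2+3*x)) :: rat) = of_nat 3 ^ (c*x + c*2 div 3) * fact (c*x + c*2 div 3) * of_nat (gs 3 (c*(2+3*x)))" for c
    using fact_dig[of 3 c 2 x] by simp
  define P :: rat where "P = 3 ^ x"
  have pw: "(3::rat) ^ (6*x+4) = 81 * P^6" "(3::rat) ^ (3*x+2) = 9 * P^3" "(3::rat) ^ (2*x+1) = 3 * P^2"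
      "(3::rat) ^ (1*x+0) = 1 * P"
    unfolding P_def by (simp_all add: power_add power_mult mult.commute)
  have pwc: "(3::rat) ^ (c*x) = P ^ c" "(3::rat) ^ x = P" for c unfolding P_def by (simp_all add: power_mult[symmetric] mult.commute)
  have P0: "P \<noteq> 0" unfolding P_def by simp
  have x0: "(of_nat x :: rat) + 1 \<noteq> 0" "3 * (of_nat x :: rat) + 1 \<noteq> 0" "2 * (of_nat x :: rat) + 1 \<noteq> 0"
       "3 * (of_nat x :: rat) + 2 \<noteq> 0"
    using of_nat_0_le_iff[of x, where 'a=rat] by linarith+
  have e1: "of_nat (6*x) + (2::rat) = 2 * (3 * of_nat x + 1)" "of_nat (6*x) + (3::rat) = 3 * (2 * of_nat x + 1)"
      "of_nat (6*x) + (4::rat) = 2 * (3 * of_nat x + 2)"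
      "of_nat (6*x) + (1::rat) = 6 * of_nat x + 1" "of_nat (3*x) + (1::rat) = 3 * of_nat x + 1"
      "of_nat (3*x) + (2::rat) = 3 * of_nat x + 2"
      "of_nat (2*x) + (1::rat) = 2 * of_nat x + 1"
    by simp_all
  have "(of_nat (A (2 + 3*x)) :: rat) = fact (6*(2+3*x)) / (fact (3*(2+3*x)) * fact (2*(2+3*x)) * fact (1*(2+3*x)))"
    using A_rat by (metis mult.left_neutral)
  also have "\<dots> = (81 * P^6 * fact (6*x+4) * of_nat (gs 3 (6*(2+3*x)))) /
      ((9 * P^3 * fact (3*x+2) * of_nat (gs 3 (3*(2+3*x)))) * (3 * P^2 * fact (2*x+1) * of_nat (gs 3 (2*(2+3*x))))
        * (1 * P * fact (1*x+0) * of_nat (gs 3 (1*(2+3*x)))))"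
    unfolding f[of 6] f[of 3] f[of 2] f[of 1] by (simp add: pw pwc)
  also have "\<dots> = (81/(9*3*1)) * (P^6/(P^3*P^2*P)) * (fact (6*x+4)/(fact (3*x+2)*fact (2*x+1)*fact (1*x+0)))
       * (of_nat (gs 3 (6*(2+3*x))) / (of_nat (gs 3 (3*(2+3*x))) * of_nat (gs 3 (2*(2+3*x))) * of_nat (gs 3 (1*(2+3*x)))))"
    by (rule rearr4)
  also have "P^6/(P^3*P^2*P) = 1" using P0 by (simp add: eval_nat_numeral)
  also have "fact (6*x+4)/(fact (3*x+2)*fact (2*x+1)*fact (1*x+0)) = (fact (6*x)/(fact (3*x)*fact (2*x)*fact x)) * (12 * (6 * of_nat x + 1) :: rat)"
  proof -
    have "fact (6*x+4)/(fact (3*x+2)*fact (2*x+1)*fact (1*x+0)) =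
      (fact (6*x) * ((6 * of_nat x + 1) * (2 * (3 * of_nat x + 1)) * (3 * (2 * of_nat x + 1)) * (2 * (3 * of_nat x + 2)))) / ((fact (3*x) * ((3 * of_nat x + 1) * (3 * of_nat x + 2))) * (fact (2*x) * (2 * of_nat x + 1)) * fact x :: rat)"
      unfolding fact_p1 fact_p2 fact_p4 e1 by simp
    also have "\<dots> = (fact (6*x)/(fact (3*x)*fact (2*x)*fact x)) * (((6 * of_nat x + 1) * (2 * (3 * of_nat x + 1)) * (3 * (2 * of_nat x + 1)) * (2 * (3 * of_nat x + 2))) / (((3 * of_nat x + 1) * (3 * of_nat x + 2)) * (2 * of_nat x + 1) * 1))"
      by (simp add: divide_inverse inverse_mult_distrib mult_ac)
    also have "(((6 * of_nat x + 1) * (2 * (3 * of_nat x + 1)) * (3 * (2 * of_nat x + 1)) * (2 * (3 * of_nat x + 2))) / (((3 * of_nat x + 1) * (3 * of_nat x + 2)) * (2 * of_nat x + 1) * 1)) = (12 * (6 * of_nat x + 1) :: rat)"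
    proof -
      have "(((6 * of_nat x + 1) * (2 * (3 * of_nat x + 1)) * (3 * (2 * of_nat x + 1)) * (2 * (3 * of_nat x + 2))) :: rat) = (12 * (6 * of_nat x + 1)) * (((3 * of_nat x + 1) * (3 * of_nat x + 2)) * (2 * of_nat x + 1) * 1)" by (simp add: algebra_simps)
      moreover have "(((3 * of_nat x + 1) * (3 * of_nat x + 2)) * (2 * of_nat x + 1) * 1 :: rat) \<noteq> 0" using x0 by simp
      ultimately show ?thesis by simp
    qed
    finally show ?thesis .
  qed
  finally show ?thesis unfolding A_rat G_def by (simp add: mult_ac)
qed

lemma rA_0: assumes "p > 0" shows "(of_nat (A (0 + p*x)) :: rat) = of_nat (A x) * G p (0 + p*x)"
proof -
  have f: "(fact (c*(0+p*x)) :: rat) = of_nat p ^ (c*x) * fact (c*x) * of_nat (gs p (c*(0+p*x)))" for c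
    using fact_dig[OF assms, of c 0 x] by simp
  define P :: rat where "P = of_nat p ^ x"
  have pw: "of_nat p ^ (c*x) = P ^ c" for c unfolding P_def by (metis power_mult mult.commute)
  have P0: "P \<noteq> 0" unfolding P_def using assms by simp
  have g0: "gs q n \<noteq> 0" for q n using gs_pos[of q n] by simp
  have f0: "(fact n :: rat) \<noteq> 0" for n by simp
  have P6: "P^6 = P^3 * P^2 * P" by (simp add: eval_nat_numeral)
  have "(of_nat (A (0 + p*x)) :: rat) = fact (6*(0+p*x)) / (fact (3*(0+p*x)) * fact (2*(0+p*x)) * fact (1*(0+p*x)))"
    using A_rat by (metis mult.left_neutral)
  also have "\<dots> = of_nat (A x) * G p (0 + p*x)"
    unfolding f pw A_rat G_def P6 using P0 g0 f0 by (simp add: field_simps)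
  finally show ?thesis .
qed

definition kk :: "nat \<Rightarrow> nat \<Rightarrow> nat" where
  "kk p b = (if p = 2 then 6 else if b = 1 then 2 else 12)"

definition r :: "nat \<Rightarrow> nat \<Rightarrow> nat \<Rightarrow> rat" where
  "r p b x = (if b = 0 then 1 else of_nat (p * kk p b) * (6 * of_nat x + 1)) * G p (b + p*x)"

lemma rA: assumes "p \<in> {2,3}" "b < p" shows "(of_nat (A (b + p*x)) :: rat) = of_nat (A x) * r p b x"
proof -
  consider "b = 0" | "p = 2" "b = 1" | "p = 3" "b = 1" | "p = 3" "b = 2" using assms by force
  then show ?thesis
  proof cases
    case 1 then show ?thesis using rA_0[of p x] assms by (auto simp: r_def)
  next
    case 2 then show ?thesis using rA_21[of x] by (simp add: r_def kk_def)
  next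
    case 3 then show ?thesis using rA_31[of x] by (simp add: r_def kk_def)
  next
    case 4 then show ?thesis using rA_32[of x] by (simp add: r_def kk_def)
  qed
qed

definition w1 :: "nat \<Rightarrow> (nat \<Rightarrow> rat) \<Rightarrow> bool" where
  "w1 p g \<longleftrightarrow> (\<forall>x. zp p (g x)) \<and> (\<forall>t a x. pc p (Suc t) (g (x + a*p^t) - g x))"

definition wclass :: "nat \<Rightarrow> (nat \<Rightarrow> nat \<Rightarrow> rat) \<Rightarrow> bool" where
  "wclass p \<phi> \<longleftrightarrow> (\<forall>x y. zp p (\<phi> x y)) \<and>
     (\<forall>t a b x y. pc p (Suc t) (\<phi> (x + a*p^t) (y + b*p^t) - \<phi> x y))"

lemma prod_diff_split: "(g' * h' - g * h :: rat) = g' * (h' - h) + (g' - g) * h"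
  by (simp add: algebra_simps)

lemma w1_mult: assumes "w1 p g" "w1 p h" shows "w1 p (\<lambda>x. g x * h x)"
proof -
  have "pc p (Suc t) (g (x + a*p^t) * h (x + a*p^t) - g x * h x)" for t a x
    unfolding prod_diff_split using assms unfolding w1_def
    by (intro pc_add pc_mult_left pc_mult_right) auto
  then show ?thesis using assms unfolding w1_def by (auto intro: zp_mult)
qed

lemma w1_G: assumes "prime p" shows "w1 p (\<lambda>x. G p (b + p*x))"
proof -
  have "pc p (Suc t) (G p (b + p*(x + a*p^t)) - G p (b + p*x))" for t a x
  proof -
    have e: "b + p*(x + a*p^t) = (b + p*x) + a * p ^ Suc t" by (simp add: algebra_simps)
    have "pc p (Suc t) (G p ((b + p*x) + a * p ^ Suc t) - G p (b + p*x))" by (rule G_cong[OF assms])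
    then show ?thesis by (simp only: e)
  qed
  then show ?thesis unfolding w1_def using G_zp[OF assms] by blast
qed

lemma pc_nat: assumes "p > 0" "p ^ k dvd n" shows "pc p k (of_nat n)"
proof -
  have "int p ^ k dvd int n" using assms(2) by (metis of_nat_dvd_iff of_nat_power)
  from pc_int[OF assms(1) this] show ?thesis by simp
qed

lemma w1_lin: assumes "p dvd 6" "p > 0" shows "w1 p (\<lambda>x. of_nat k * (6 * of_nat x + 1))"
proof -
  have "pc p (Suc t) (of_nat k * (6 * of_nat (x + a*p^t) + 1) - of_nat k * (6 * of_nat x + 1))" for t a x
  proof -
    obtain q where q: "6 = p * q" using assms(1) by blast
    have e: "(of_nat k * (6 * of_nat (x + a*p^t) + 1) - of_nat k * (6 * of_nat x + 1) :: rat)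
       = of_nat (6 * k * a * p^t)"
      by (simp add: algebra_simps)
    have h1: "6 * k * a * p^t = (p*q) * k * a * p^t" by (simp only: q[symmetric])
    have h2: "(p*q) * k * a * p^t = (k * a * q) * p ^ Suc t" by (simp add: algebra_simps)
    have "6 * k * a * p^t = (k * a * q) * p ^ Suc t" using h1 h2 by simp
    then have "p ^ Suc t dvd 6 * k * a * p^t" by (metis dvd_triv_right)
    from pc_nat[OF assms(2) this] show ?thesis unfolding e .
  qed
  moreover have "zp p (of_nat k * (6 * of_nat x + 1))" for x
  proof -
    have "(of_nat k * (6 * of_nat x + 1) :: rat) = of_nat (k * (6 * x + 1))" by (simp add: algebra_simps)
    then show ?thesis by (metis zp_nat)
  qed
  ultimately show ?thesis unfolding w1_def by blast
qed

lemma w1_p: assumes "p > 0" "w1 p g" shows "w1 p (\<lambda>x. of_nat p * g x)"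
proof -
  have "pc p (Suc t) (of_nat p * g (x + a*p^t) - of_nat p * g x)" for t a x
  proof -
    have "pc p (Suc t) (g (x + a*p^t) - g x)" using assms(2) unfolding w1_def by blast
    then have "pc p t (g (x + a*p^t) - g x)" using pc_Suc assms(1) by blast
    from pc_mult_p[OF assms(1) this] show ?thesis by (simp add: algebra_simps)
  qed
  then show ?thesis using assms(2) unfolding w1_def by (auto intro: zp_mult)
qed

lemma w1_r: assumes "p \<in> {2,3}" "b < p" shows "w1 p (\<lambda>x. r p b x)"
proof -
  have pp: "prime p" "p > 0" "p dvd 6" using assms(1) by auto
  show ?thesis
  proof (cases "b = 0")
    case True
    then show ?thesis using w1_G[OF pp(1), of b] unfolding r_def by simp
  next
    case False
    have "w1 p (\<lambda>x. of_nat (p * kk p b) * (6 * of_nat x + 1))" by (rule w1_lin[OF pp(3,2)])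
    from w1_mult[OF this w1_G[OF pp(1), of b]] show ?thesis unfolding r_def using False by simp
  qed
qed

lemma w1_rdiv: assumes "p \<in> {2,3}" "b < p" "b > 0" shows "w1 p (\<lambda>x. r p b x / of_nat p)"
proof -
  have pp: "prime p" "p > 0" "p dvd 6" using assms(1) by auto
  have e: "r p b x / of_nat p = of_nat (kk p b) * (6 * of_nat x + 1) * G p (b + p*x)" for x
    unfolding r_def using assms pp by (simp add: field_simps)
  have "w1 p (\<lambda>x. of_nat (kk p b) * (6 * of_nat x + 1))" by (rule w1_lin[OF pp(3,2)])
  from w1_mult[OF this w1_G[OF pp(1), of b]] show ?thesis unfolding e .
qed

lemma r_split: assumes "p > 0" shows "r p b x = of_nat p * (r p b x / of_nat p)"
  using assms by simp

lemma wc_fst: "w1 p g \<Longrightarrow> wclass p (\<lambda>x y. g x)"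
  unfolding w1_def wclass_def by blast

lemma wc_snd: "w1 p g \<Longrightarrow> wclass p (\<lambda>x y. g y)"
  unfolding w1_def wclass_def by blast

lemma wc_mult: assumes "wclass p f" "wclass p g" shows "wclass p (\<lambda>x y. f x y * g x y)"
proof -
  have "pc p (Suc t) (f (x + a*p^t) (y + b*p^t) * g (x + a*p^t) (y + b*p^t) - f x y * g x y)" for t a b x y
    unfolding prod_diff_split using assms unfolding wclass_def
    by (intro pc_add pc_mult_left pc_mult_right) auto
  then show ?thesis using assms unfolding wclass_def by (auto intro: zp_mult)
qed

lemma wc_const: "zp p c \<Longrightarrow> wclass p (\<lambda>x y. c)"
  unfolding wclass_def by simp

lemma wc_p: assumes "p > 0" "wclass p g" shows "wclass p (\<lambda>x y. of_nat p * g x y)"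
proof -
  have "pc p (Suc t) (of_nat p * g (x + a*p^t) (y + b*p^t) - of_nat p * g x y)" for t a b x y
  proof -
    have "pc p (Suc t) (g (x + a*p^t) (y + b*p^t) - g x y)" using assms(2) unfolding wclass_def by blast
    then have "pc p t (g (x + a*p^t) (y + b*p^t) - g x y)" using pc_Suc assms(1) by blast
    from pc_mult_p[OF assms(1) this] show ?thesis by (simp add: algebra_simps)
  qed
  then show ?thesis using assms(2) unfolding wclass_def by (auto intro: zp_mult)
qed

lemma wc_sub: assumes "p > 0" "wclass p f" shows "wclass p (\<lambda>x y. f (c + p*x) (d + p*y))"
proof -
  have "pc p (Suc t) (f (c + p*(x + a*p^t)) (d + p*(y + b*p^t)) - f (c + p*x) (d + p*y))" for t a b x y
  proof -
    have e: "c + p*(x + a*p^t) = (c + p*x) + a * p ^ Suc t" "d + p*(y + b*p^t) = (d + p*y) + b * p ^ Suc t"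
      by (simp_all add: algebra_simps)
    have "pc p (Suc (Suc t)) (f ((c + p*x) + a * p ^ Suc t) ((d + p*y) + b * p ^ Suc t) - f (c + p*x) (d + p*y))"
      using assms(2) unfolding wclass_def by blast
    then show ?thesis unfolding e using pc_Suc assms(1) by blast
  qed
  then show ?thesis using assms(2) unfolding wclass_def by blast
qed

lemma pc_div_p: "pc p (Suc k) z \<Longrightarrow> pc p k (z / of_nat p)"
  unfolding pc_def by (simp add: field_simps)

lemma wc_low: assumes "p > 0" "wclass p f" shows "wclass p (\<lambda>x y. (f (p*x) (p*y) - f 0 0) / of_nat p)"
proof -
  have z: "zp p ((f (p*x) (p*y) - f 0 0) / of_nat p)" for x y
  proof -
    have "pc p (Suc 1) (f (0 + x*p^1) (0 + y*p^1) - f 0 0)" using assms(2) unfolding wclass_def by blast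
    then have "pc p 1 ((f (p*x) (p*y) - f 0 0) / of_nat p)" using pc_div_p by (simp add: mult.commute)
    then have "pc p 0 ((f (p*x) (p*y) - f 0 0) / of_nat p)" using pc_Suc assms(1) by (metis One_nat_def)
    then show ?thesis unfolding pc_def by simp
  qed
  have "pc p (Suc t) ((f (p*(x + a*p^t)) (p*(y + b*p^t)) - f 0 0) / of_nat p - (f (p*x) (p*y) - f 0 0) / of_nat p)" for t a b x y
  proof -
    have e: "p*(x + a*p^t) = p*x + a * p ^ Suc t" "p*(y + b*p^t) = p*y + b * p ^ Suc t"
      by (simp_all add: algebra_simps)
    have "pc p (Suc (Suc t)) (f (p*x + a * p ^ Suc t) (p*y + b * p ^ Suc t) - f (p*x) (p*y))"
      using assms(2) unfolding wclass_def by blast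
    from pc_div_p[OF this] show ?thesis unfolding e by (simp add: diff_divide_distrib)
  qed
  then show ?thesis using z unfolding wclass_def by blast
qed


definition S :: "nat \<Rightarrow> nat \<Rightarrow> nat \<Rightarrow> nat \<Rightarrow> (nat \<Rightarrow> nat \<Rightarrow> rat) \<Rightarrow> rat" where
  "S p s N m \<phi> = (\<Sum>j \<in> {m*p^s..<(m+1)*p^s}. if j \<le> N then of_nat (A (N-j)) * of_nat (A j) * (\<phi> (N-j) j - \<phi> j (N-j)) else 0)"

lemma S_scale: "S p s N m (\<lambda>x y. c * \<phi> x y) = c * S p s N m \<phi>"
  unfolding S_def by (simp add: sum_distrib_left algebra_simps if_distrib cong: if_cong)

lemma S_add: "S p s N m (\<lambda>x y. \<phi> x y + \<psi> x y) = S p s N m \<phi> + S p s N m \<psi>"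
  unfolding S_def sum.distrib[symmetric] by (rule sum.cong) (auto simp: algebra_simps)

lemma S_sym: assumes "\<And>x y. \<phi> x y = \<phi> y x" shows "S p s N m \<phi> = 0"
  unfolding S_def using assms by (simp cong: if_cong)

lemma S_cong: assumes "\<And>x y. \<phi> x y = \<psi> x y" shows "S p s N m \<phi> = S p s N m \<psi>"
  using assms by (metis ext)

lemma sum_blocks:
  fixes p a L :: nat and X :: "nat \<Rightarrow> 'a::comm_monoid_add"
  shows "(\<Sum>j = p*a..<p*(a+L). X j) = (\<Sum>y = a..<a+L. \<Sum>b<p. X (b + p*y))"
proof (induction L)
  case 0 then show ?case by simp
next
  case (Suc L)
  have "(\<Sum>j = p*a..<p*(a + Suc L). X j) = (\<Sum>j = p*a..<p*(a+L). X j) + (\<Sum>j = p*(a+L)..<p*(a+L)+p. X j)"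
    by (subst sum.atLeastLessThan_concat) (auto simp: algebra_simps)
  also have "(\<Sum>j = p*(a+L)..<p*(a+L)+p. X j) = (\<Sum>b<p. X (b + p*(a+L)))"
  proof -
    have "(\<Sum>j = p*(a+L)..<p*(a+L)+p. X j) = (\<Sum>j = 0 + p*(a+L)..<p + p*(a+L). X j)" by (simp add: add.commute)
    also have "\<dots> = (\<Sum>b = 0..<p. X (b + p*(a+L)))" by (rule sum.shift_bounds_nat_ivl)
    finally show ?thesis by (simp add: lessThan_atLeast0)
  qed
  finally show ?case using Suc by simp
qed

lemma S_block: "S p (Suc s) N m \<phi> = (\<Sum>b<p. \<Sum>y \<in> {m*p^s..<(m+1)*p^s}.
   (if b + p*y \<le> N then of_nat (A (N-(b + p*y))) * of_nat (A (b + p*y)) * (\<phi> (N-(b + p*y)) (b + p*y) - \<phi> (b + p*y) (N-(b + p*y))) else 0))"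
proof -
  have e: "m*p^Suc s = p*(m*p^s)" "(m+1)*p^Suc s = p*(m*p^s + p^s)" by (simp_all add: algebra_simps)
  show ?thesis unfolding S_def e sum_blocks
    by (subst sum.swap) (simp add: algebra_simps)
qed


definition Psi :: "nat \<Rightarrow> (nat \<Rightarrow> nat \<Rightarrow> rat) \<Rightarrow> nat \<Rightarrow> nat \<Rightarrow> nat \<Rightarrow> nat \<Rightarrow> rat" where
  "Psi p \<phi> c b x y = r p c x * r p b y * \<phi> (c + p*x) (b + p*y)"

definition Z :: "nat \<Rightarrow> nat \<Rightarrow> nat \<Rightarrow> nat \<Rightarrow> (nat \<Rightarrow> nat \<Rightarrow> rat) \<Rightarrow> nat \<Rightarrow> nat \<Rightarrow> rat" where
  "Z p s M m \<phi> b c = (\<Sum>y \<in> {m*p^s..<(m+1)*p^s}. if y \<le> M then of_nat (A (M - y)) * of_nat (A y) *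
       (Psi p \<phi> c b (M - y) y - Psi p \<phi> b c y (M - y)) else 0)"

definition Y :: "nat \<Rightarrow> nat \<Rightarrow> nat \<Rightarrow> nat \<Rightarrow> (nat \<Rightarrow> nat \<Rightarrow> rat) \<Rightarrow> nat \<Rightarrow> nat \<Rightarrow> rat" where
  "Y p s N m \<phi> b c = (if b + c \<le> N \<and> p dvd (N - b - c) then Z p s ((N - b - c) div p) m \<phi> b c else 0)"

lemma inner_sum:
  assumes p: "p \<in> {2,3}" and b: "b < p"
  shows "(\<Sum>y \<in> {m*p^s..<(m+1)*p^s}.
   (if b + p*y \<le> N then of_nat (A (N-(b + p*y))) * of_nat (A (b + p*y)) * (\<phi> (N-(b + p*y)) (b + p*y) - \<phi> (b + p*y) (N-(b + p*y))) else 0))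
   = (\<Sum>c<p. Y p s N m \<phi> b c)"
proof (cases "b \<le> N")
  case False
  then show ?thesis unfolding Y_def by (auto intro!: sum.neutral)
next
  case True
  have p0: "p > 0" using p by auto
  define c0 where "c0 = (N - b) mod p"
  define M where "M = (N - b) div p"
  have c0p: "c0 < p" unfolding c0_def using p0 by simp
  have NM: "N = b + c0 + p*M" unfolding c0_def M_def using True
    by (metis add.assoc add.commute le_add_diff_inverse mod_mult_div_eq)
  have Yc: "Y p s N m \<phi> b c = (if c = c0 then Z p s M m \<phi> b c else 0)" if "c < p" for c
  proof (cases "c = c0")
    case True
    have "N - b - c = p * M" using NM True by simp
    then show ?thesis using True NM p0 unfolding Y_def by simp
  next
    case False
    have "\<not> (b + c \<le> N \<and> p dvd (N - b - c))"
    proof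
      assume h: "b + c \<le> N \<and> p dvd (N - b - c)"
      then obtain k where k: "N - b - c = p * k" by blast
      then have "N - b = c + p * k" using h by simp
      then have "(N - b) mod p = c" using that by simp
      then show False using False unfolding c0_def by simp
    qed
    then show ?thesis using False unfolding Y_def by auto
  qed
  have "(\<Sum>c<p. Y p s N m \<phi> b c) = (\<Sum>c<p. if c = c0 then Z p s M m \<phi> b c else 0)"
    using Yc by (intro sum.cong) auto
  also have "\<dots> = Z p s M m \<phi> b c0" using c0p by (simp add: sum.delta')
  finally have R: "(\<Sum>c<p. Y p s N m \<phi> b c) = Z p s M m \<phi> b c0" .
  have pt: "(if b + p*y \<le> N then of_nat (A (N-(b + p*y))) * of_nat (A (b + p*y)) * (\<phi> (N-(b + p*y)) (b + p*y) - \<phi> (b + p*y) (N-(b + p*y))) else 0)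
     = (if y \<le> M then of_nat (A (M - y)) * of_nat (A y) * (Psi p \<phi> c0 b (M - y) y - Psi p \<phi> b c0 y (M - y)) else 0)" for y
  proof (cases "y \<le> M")
    case True
    have le: "b + p*y \<le> N" using NM True by (simp add: add_le_mono)
    have d: "N - (b + p*y) = c0 + p*(M - y)" using NM True by (simp add: diff_mult_distrib2)
    have A1: "(of_nat (A (c0 + p*(M-y))) :: rat) = of_nat (A (M-y)) * r p c0 (M-y)" by (rule rA[OF p c0p])
    have A2: "(of_nat (A (b + p*y)) :: rat) = of_nat (A y) * r p b y" by (rule rA[OF p b])
    show ?thesis using le True unfolding d A1 A2 Psi_def by (simp add: algebra_simps)
  next
    case False
    then have "M < y" by simp
    then have "p*M + p \<le> p*y" using p0 by (metis Suc_leI mult_Suc_right add.commute mult_le_mono2)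
    then have "\<not> b + p*y \<le> N" using NM c0p by linarith
    then show ?thesis using False by simp
  qed
  show ?thesis unfolding R Z_def using pt by (intro sum.cong) auto
qed


lemma S_decomp: assumes p: "p \<in> {2,3}"
  shows "S p (Suc s) N m \<phi> = (\<Sum>b<p. \<Sum>c<p. Y p s N m \<phi> b c)"
  unfolding S_block by (rule sum.cong[OF refl], rule inner_sum[OF p], simp)

definition W :: "nat \<Rightarrow> nat \<Rightarrow> nat \<Rightarrow> nat \<Rightarrow> (nat \<Rightarrow> nat \<Rightarrow> rat) \<Rightarrow> nat \<Rightarrow> nat \<Rightarrow> rat" where
  "W p s M m \<phi> b c = (\<Sum>y \<in> {m*p^s..<(m+1)*p^s}. if y \<le> M then of_nat (A (M - y)) * of_nat (A y) *
       (Psi p \<phi> c b y (M - y) - Psi p \<phi> b c y (M - y)) else 0)"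

lemma Z_split: "Z p s M m \<phi> b c = S p s M m (Psi p \<phi> c b) + W p s M m \<phi> b c"
  unfolding Z_def S_def W_def sum.distrib[symmetric] by (rule sum.cong) (auto simp: algebra_simps)

lemma W_anti: "W p s M m \<phi> c b = - W p s M m \<phi> b c"
  unfolding W_def sum_negf[symmetric] by (rule sum.cong) (auto simp: algebra_simps)

definition Y1 where "Y1 p s N m \<phi> b c = (if b + c \<le> N \<and> p dvd (N - b - c) then S p s ((N - b - c) div p) m (Psi p \<phi> c b) else 0)"
definition Y2 where "Y2 p s N m \<phi> b c = (if b + c \<le> N \<and> p dvd (N - b - c) then W p s ((N - b - c) div p) m \<phi> b c else 0)"

lemma Y_split: "Y p s N m \<phi> b c = Y1 p s N m \<phi> b c + Y2 p s N m \<phi> b c"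
  unfolding Y_def Y1_def Y2_def Z_split by simp

lemma Y2_anti: "Y2 p s N m \<phi> c b = - Y2 p s N m \<phi> b c"
proof -
  have e1: "(c + b \<le> N \<and> p dvd (N - c - b)) = (b + c \<le> N \<and> p dvd (N - b - c))" by (simp add: add.commute)
  have e2: "N - c - b = N - b - c" by simp
  show ?thesis unfolding Y2_def e1 e2 W_anti[of p s "(N - b - c) div p" m \<phi> c b] by simp
qed

lemma Y2_sum: "(\<Sum>b<p. \<Sum>c<p. Y2 p s N m \<phi> b c) = (0::rat)"
proof -
  let ?T = "(\<Sum>b<p. \<Sum>c<p. Y2 p s N m \<phi> b c)"
  have "?T = (\<Sum>c<p. \<Sum>b<p. Y2 p s N m \<phi> b c)" by (rule sum.swap)
  also have "\<dots> = (\<Sum>c<p. \<Sum>b<p. - Y2 p s N m \<phi> c b)"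
    by (intro sum.cong refl) (rule Y2_anti)
  also have "\<dots> = - ?T" by (simp add: sum_negf)
  finally show ?thesis by simp
qed

lemma S_decomp1: assumes p: "p \<in> {2,3}"
  shows "S p (Suc s) N m \<phi> = (\<Sum>b<p. \<Sum>c<p. Y1 p s N m \<phi> b c)"
proof -
  have "S p (Suc s) N m \<phi> = (\<Sum>b<p. \<Sum>c<p. Y1 p s N m \<phi> b c) + (\<Sum>b<p. \<Sum>c<p. Y2 p s N m \<phi> b c)"
    unfolding S_decomp[OF p] Y_split by (simp add: sum.distrib)
  then show ?thesis using Y2_sum by simp
qed

lemma psi_split:
  assumes p: "p \<in> {2,3}" and wc: "wclass p \<phi>" and b: "b < p" and c: "c < p"
  shows "\<exists>\<chi>1 \<chi>2. wclass p \<chi>2 \<and> (\<forall>x y. \<chi>1 x y = \<chi>1 y x) \<and>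
            (\<forall>x y. Psi p \<phi> c b x y = \<chi>1 x y + of_nat p * \<chi>2 x y)"
proof -
  have p0: "p > 0" using p by auto
  have sub: "wclass p (\<lambda>x y. \<phi> (c + p*x) (b + p*y))" by (rule wc_sub[OF p0 wc])
  consider "c > 0" | "c = 0" "b > 0" | "c = 0" "b = 0" by blast
  then show ?thesis
  proof cases
    case 1
    let ?\<chi> = "\<lambda>x y. (r p c x / of_nat p * r p b y) * \<phi> (c + p*x) (b + p*y)"
    have "wclass p ?\<chi>"
      by (intro wc_mult wc_fst wc_snd w1_rdiv w1_r p b c 1 sub)
    moreover have "Psi p \<phi> c b x y = 0 + of_nat p * ?\<chi> x y" for x y
      unfolding Psi_def using p0 by simp
    ultimately show ?thesis by (intro exI[of _ "\<lambda>x y. 0"] exI[of _ ?\<chi>]) auto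
  next
    case 2
    let ?\<chi> = "\<lambda>x y. (r p c x * (r p b y / of_nat p)) * \<phi> (c + p*x) (b + p*y)"
    have "wclass p ?\<chi>"
      by (intro wc_mult wc_fst wc_snd w1_rdiv w1_r p b c 2 sub)
    moreover have "Psi p \<phi> c b x y = 0 + of_nat p * ?\<chi> x y" for x y
      unfolding Psi_def using p0 by simp
    ultimately show ?thesis by (intro exI[of _ "\<lambda>x y. 0"] exI[of _ ?\<chi>]) auto
  next
    case 3
    let ?\<chi> = "\<lambda>x y. (r p 0 x * r p 0 y) * ((\<phi> (p*x) (p*y) - \<phi> 0 0) / of_nat p)"
    let ?\<chi>1 = "\<lambda>x y. \<phi> 0 0 * (r p 0 x * r p 0 y)"
    have "wclass p ?\<chi>"
      by (intro wc_mult wc_fst wc_snd w1_r wc_low p p0 wc)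
    moreover have "Psi p \<phi> c b x y = ?\<chi>1 x y + of_nat p * ?\<chi> x y" for x y
      unfolding Psi_def using p0 3 by (simp add: field_simps)
    moreover have "?\<chi>1 x y = ?\<chi>1 y x" for x y by simp
    ultimately show ?thesis by (intro exI[of _ ?\<chi>1] exI[of _ ?\<chi>]) auto
  qed
qed

lemma S_0: "S p 0 N m \<phi> = (if m \<le> N then of_nat (A (N-m)) * of_nat (A m) * (\<phi> (N-m) m - \<phi> m (N-m)) else 0)"
  unfolding S_def by simp

lemma dwork: assumes p: "p \<in> {2,3}" shows "wclass p \<phi> \<Longrightarrow> pc p (Suc s) (S p s N m \<phi>)"
proof (induction s arbitrary: N m \<phi>)
  case 0
  have p0: "p > 0" using p by auto
  have h1: "pc p (Suc 0) (\<phi> (0 + (N-m)*p^0) (0 + m*p^0) - \<phi> 0 0)" using 0 unfolding wclass_def by blast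
  have h2: "pc p (Suc 0) (\<phi> (0 + m*p^0) (0 + (N-m)*p^0) - \<phi> 0 0)" using 0 unfolding wclass_def by blast
  have "pc p (Suc 0) ((\<phi> (N-m) m - \<phi> 0 0) - (\<phi> m (N-m) - \<phi> 0 0))" using pc_diff[OF h1 h2] by simp
  then have "pc p (Suc 0) (\<phi> (N-m) m - \<phi> m (N-m))" by simp
  then have "pc p (Suc 0) (of_nat (A (N-m)) * of_nat (A m) * (\<phi> (N-m) m - \<phi> m (N-m)))"
    by (intro pc_mult_left) (auto intro: zp_mult)
  then show ?case unfolding S_0 by simp
next
  case (Suc s)
  have p0: "p > 0" using p by auto
  have "pc p (Suc (Suc s)) (Y1 p s N m \<phi> b c)" if bc: "b < p" "c < p" for b c
  proof -
    obtain \<chi>1 \<chi>2 where ch: "wclass p \<chi>2" "\<forall>x y. \<chi>1 x y = \<chi>1 y x"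
       "\<forall>x y. Psi p \<phi> c b x y = \<chi>1 x y + of_nat p * \<chi>2 x y"
      using psi_split[of p \<phi> b c] p Suc.prems bc by blast
    have "S p s M m (Psi p \<phi> c b) = of_nat p * S p s M m \<chi>2" for M
    proof -
      have "S p s M m (Psi p \<phi> c b) = S p s M m (\<lambda>x y. \<chi>1 x y + of_nat p * \<chi>2 x y)"
        using ch(3) by (intro S_cong) auto
      also have "\<dots> = S p s M m \<chi>1 + of_nat p * S p s M m \<chi>2"
        unfolding S_add S_scale ..
      also have "S p s M m \<chi>1 = 0" using ch(2) by (intro S_sym) auto
      finally show ?thesis by simp
    qed
    moreover have "pc p (Suc (Suc s)) (of_nat p * S p s M m \<chi>2)" for M
      using Suc.IH[OF ch(1)] p0 by (intro pc_mult_p)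
    ultimately show ?thesis unfolding Y1_def by simp
  qed
  then show ?case unfolding S_decomp1[OF p] by (intro pc_sum) auto
qed


lemma fact_add: "(fact (n + k) :: rat) = fact n * (\<Prod>i<k. of_nat (n + i + 1))"
  by (induction k) (simp_all add: algebra_simps)

lemma A_Suc: "(of_nat (A (Suc m)) :: rat) * (of_nat m + 1)^2 = of_nat (A m) * (12 * (6 * of_nat m + 1) * (6 * of_nat m + 5))"
proof -
  have e: "6 * Suc m = 6*m + 6" "3 * Suc m = 3*m + 3" "2 * Suc m = 2*m + 2" by simp_all
  have f6: "(fact (6*m+6) :: rat) = fact (6*m) * ((6 * of_nat m + 1) * (6 * of_nat m + 2) * (6 * of_nat m + 3) * (6 * of_nat m + 4) * (6 * of_nat m + 5) * (6 * of_nat m + 6))"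
    unfolding fact_add by (simp add: eval_nat_numeral algebra_simps)
  have f3: "(fact (3*m+3) :: rat) = fact (3*m) * ((3 * of_nat m + 1) * (3 * of_nat m + 2) * (3 * of_nat m + 3))"
    unfolding fact_add by (simp add: eval_nat_numeral algebra_simps)
  have f2: "(fact (2*m+2) :: rat) = fact (2*m) * ((2 * of_nat m + 1) * (2 * of_nat m + 2))"
    unfolding fact_add by (simp add: eval_nat_numeral algebra_simps)
  have f1: "(fact (Suc m) :: rat) = fact m * (of_nat m + 1)" by simp
  define Q where "Q = (fact (6*m) :: rat) / (fact (3*m) * fact (2*m) * fact m)"
  have AQ: "(of_nat (A m) :: rat) = Q" unfolding Q_def A_rat ..
  have "(of_nat (A (Suc m)) :: rat) = Q * (((6 * of_nat m + 1) * (6 * of_nat m + 2) * (6 * of_nat m + 3) * (6 * of_nat m + 4) * (6 * of_nat m + 5) * (6 * of_nat m + 6)) /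
     (((3 * of_nat m + 1) * (3 * of_nat m + 2) * (3 * of_nat m + 3)) * ((2 * of_nat m + 1) * (2 * of_nat m + 2)) * (of_nat m + 1)))"
    unfolding A_rat e f6 f3 f2 f1 Q_def by (simp add: divide_inverse inverse_mult_distrib mult_ac)
  also have "(((6 * of_nat m + 1) * (6 * of_nat m + 2) * (6 * of_nat m + 3) * (6 * of_nat m + 4) * (6 * of_nat m + 5) * (6 * of_nat m + 6)) /
     (((3 * of_nat m + 1) * (3 * of_nat m + 2) * (3 * of_nat m + 3)) * ((2 * of_nat m + 1) * (2 * of_nat m + 2)) * (of_nat m + 1)))
     = ((12 * (6 * of_nat m + 1) * (6 * of_nat m + 5)) / (of_nat m + 1)^2 :: rat)"
  proof -
    have nz: "(3 * of_nat m + 1 :: rat) \<noteq> 0" "(3 * of_nat m + 2 :: rat) \<noteq> 0" "(2 * of_nat m + 1 :: rat) \<noteq> 0" "(of_nat m + 1 :: rat) \<noteq> 0"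
      using of_nat_0_le_iff[of m, where 'a=rat] by linarith+
    have "((6 * of_nat m + 1) * (6 * of_nat m + 2) * (6 * of_nat m + 3) * (6 * of_nat m + 4) * (6 * of_nat m + 5) * (6 * of_nat m + 6)) * (of_nat m + 1)^2
       = (12 * (6 * of_nat m + 1) * (6 * of_nat m + 5)) * (((3 * of_nat m + 1) * (3 * of_nat m + 2) * (3 * of_nat m + 3)) * ((2 * of_nat m + 1) * (2 * of_nat m + 2)) * (of_nat m + 1) :: rat)"
      by (simp add: algebra_simps power2_eq_square)
    then show ?thesis using nz by (simp add: divide_eq_eq eq_divide_eq)
  qed
  finally show ?thesis unfolding AQ using of_nat_0_le_iff[of m, where 'a=rat]
    by (simp add: field_simps)
qed

lemma F_nth: "F $ m = of_nat (A m)"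
proof (induction m)
  case 0 then show ?case unfolding F_def fps_scale_def hyp2F1_def A_def by simp
next
  case (Suc m)
  have "F $ Suc m = F $ m * (432 * (1/6 + of_nat m) * (5/6 + of_nat m) / ((1 + of_nat m) * (of_nat m + 1)))"
    unfolding F_def fps_scale_def hyp2F1_def by (simp add: pochhammer_Suc field_simps)
  also have "\<dots> = of_nat (A m) * (12 * (6 * of_nat m + 1) * (6 * of_nat m + 5)) / (of_nat m + 1)^2"
  proof -
    have "432 * (1/6 + of_nat m) * (5/6 + of_nat m) = (12 * (6 * of_nat m + 1) * (6 * of_nat m + 5) :: rat)"
      by (simp add: algebra_simps)
    moreover have "(1 + of_nat m) * (of_nat m + 1) = ((of_nat m + 1)^2 :: rat)" by (simp add: power2_eq_square algebra_simps)
    ultimately show ?thesis unfolding Suc by (simp add: mult.assoc)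
  qed
  also have "\<dots> = of_nat (A (Suc m))"
    using A_Suc[of m] of_nat_0_le_iff[of m, where 'a=rat] by (simp add: field_simps)
  finally show ?case .
qed

lemma F_Abs: "F = Abs_fps (\<lambda>m. of_nat (A m))"
  by (rule fps_ext) (simp add: F_nth)


definition fint :: "rat fps \<Rightarrow> bool" where "fint f \<longleftrightarrow> (\<forall>n. f $ n \<in> \<int>)"

lemma fint_add: "fint f \<Longrightarrow> fint g \<Longrightarrow> fint (f + g)"
  unfolding fint_def by auto
lemma fint_diff: "fint f \<Longrightarrow> fint g \<Longrightarrow> fint (f - g)"
  unfolding fint_def by auto
lemma fint_mult: "fint f \<Longrightarrow> fint g \<Longrightarrow> fint (f * g)"
  unfolding fint_def fps_mult_nth by (auto intro!: Ints_sum Ints_mult)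
lemma fint_const: "fint (fps_const (of_int c))"
  unfolding fint_def by auto
lemma fint_1: "fint 1"
  using fint_const[of 1] by simp
lemma fint_0: "fint 0"
  unfolding fint_def by simp
lemma fint_deriv: "fint f \<Longrightarrow> fint (fps_deriv f)"
  unfolding fint_def by (auto intro!: Ints_mult)
lemma fint_derivs: "fint f \<Longrightarrow> fint ((fps_deriv ^^ n) f)"
  by (induction n) (auto intro: fint_deriv)
lemma fint_nat: "fint (Abs_fps (\<lambda>n. of_nat (g n)))"
  unfolding fint_def by simp
lemma fint_X: "fint (fps_X ^ k)"
  unfolding fint_def by simp

lemma compX_nth:
  fixes p n :: nat
  assumes "p > 0"
  shows "(f oo fps_X ^ p) $ n = (if p dvd n then f $ (n div p) else (0::rat))"
proof -
  have "(f oo fps_X ^ p) $ n = (\<Sum>i=0..n. f $ i * (fps_X ^ (p*i)) $ n)"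
    unfolding fps_compose_nth by (simp add: power_mult)
  also have "\<dots> = (\<Sum>i=0..n. if i = n div p then (if p dvd n then f $ i else 0) else 0)"
  proof (rule sum.cong[OF refl])
    fix i assume "i \<in> {0..n}"
    have "(n = p*i) \<longleftrightarrow> (p dvd n \<and> i = n div p)" using assms by auto
    then show "f $ i * (fps_X ^ (p*i)) $ n = (if i = n div p then (if p dvd n then f $ i else 0) else 0)"
      by auto
  qed
  also have "\<dots> = (if p dvd n then f $ (n div p) else 0)"
    by (simp add: sum.delta)
  finally show ?thesis .
qed

lemma fint_compX: "p > 0 \<Longrightarrow> fint f \<Longrightarrow> fint (f oo fps_X ^ p)"
  unfolding fint_def by (simp add: compX_nth)

lemma fint_inverse: assumes "fint f" "f $ 0 = 1" shows "fint (inverse f)"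
proof -
  have "inverse f $ n \<in> \<int>" for n
  proof (induction n rule: less_induct)
    case (less n)
    show ?case
    proof (cases n)
      case 0 then show ?thesis using assms by simp
    next
      case (Suc k)
      have "inverse f $ n = - (\<Sum>i=1..n. f $ i * inverse f $ (n - i))"
        unfolding fps_inverse_def using assms(2) Suc by simp
      moreover have "(\<Sum>i=1..n. f $ i * inverse f $ (n - i)) \<in> \<int>"
        using assms(1) less Suc unfolding fint_def by (intro Ints_sum Ints_mult) auto
      ultimately show ?thesis by simp
    qed
  qed
  then show ?thesis unfolding fint_def by blast
qed

lemma sum_mult_p:
  fixes p n :: nat and u :: "nat \<Rightarrow> rat"
  assumes "p > 0"
  shows "(\<Sum>k=0..n. if p dvd k then u k else 0) = (\<Sum>j=0..n div p. (u (p*j) :: rat))"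
proof -
  have "(\<Sum>k=0..n. if p dvd k then u k else 0) = sum u {k \<in> {0..n}. p dvd k}"
    using sum.inter_filter[of "{0..n}" u "\<lambda>k. p dvd k"] by simp
  also have "{k \<in> {0..n}. p dvd k} = (\<lambda>j. p*j) ` {0..n div p}"
  proof
    show "{k \<in> {0..n}. p dvd k} \<subseteq> (\<lambda>j. p*j) ` {0..n div p}"
    proof
      fix k assume k: "k \<in> {k \<in> {0..n}. p dvd k}"
      then obtain j where j: "k = p*j" by auto
      have "j = k div p" using j assms by simp
      then have "j \<le> n div p" using k by (simp add: div_le_mono)
      then show "k \<in> (\<lambda>j. p*j) ` {0..n div p}" using j by auto
    qed
  next
    show "(\<lambda>j. p*j) ` {0..n div p} \<subseteq> {k \<in> {0..n}. p dvd k}"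
    proof
      fix k assume "k \<in> (\<lambda>j. p*j) ` {0..n div p}"
      then obtain j where j0: "k = p*j" "j \<in> {0..n div p}" by (rule imageE)
      then have j: "k = p*j" "j \<le> n div p" by auto
      have "p*j \<le> p*(n div p)" using j by simp
      also have "\<dots> \<le> n" by simp
      finally show "k \<in> {k \<in> {0..n}. p dvd k}" using j by auto
    qed
  qed
  also have "sum u ((\<lambda>j. p*j) ` {0..n div p}) = (\<Sum>j=0..n div p. u (p*j))"
    using assms by (subst sum.reindex) (auto simp: inj_on_def)
  finally show ?thesis .
qed

lemma mult_compX_nth:
  fixes p n :: nat
  assumes "p > 0"
  shows "(f * (g oo fps_X ^ p)) $ n = (\<Sum>j=0..n div p. f $ (n - p*j) * (g $ j :: rat))"
proof -
  have "(f * (g oo fps_X ^ p)) $ n = (\<Sum>i=0..n. f $ i * (if p dvd (n - i) then g $ ((n - i) div p) else 0))"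
    unfolding fps_mult_nth compX_nth[OF assms] ..
  also have "\<dots> = (\<Sum>k=0..n. f $ (n - k) * (if p dvd k then g $ (k div p) else 0))"
    by (subst sum.atLeastAtMost_rev) (intro sum.cong refl, auto)
  also have "\<dots> = (\<Sum>k=0..n. if p dvd k then f $ (n - k) * g $ (k div p) else 0)"
    by (intro sum.cong refl) auto
  also have "\<dots> = (\<Sum>j=0..n div p. f $ (n - p*j) * g $ (p*j div p))"
    by (rule sum_mult_p[OF assms])
  finally show ?thesis using assms by simp
qed


lemma Ftr_nth: "Ftr p s $ m = (if m < p ^ s then of_nat (A m) else 0)"
  unfolding Ftr_def by simp

lemma A0: "A 0 = 1" unfolding A_def by simp

lemma fint_F: "fint F" unfolding F_Abs by (rule fint_nat)

lemma fint_Ftr: "fint (Ftr p s)"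
  unfolding fint_def Ftr_nth by simp

lemma F0: "F $ 0 = 1" by (simp add: F_nth A0)

lemma Ftr0: "p > 0 \<Longrightarrow> Ftr p s $ 0 = 1" by (simp add: Ftr_nth A0)

lemma Ftr_zero: "Ftr p 0 = 1"
  by (rule fps_ext) (simp add: Ftr_nth A0)

lemma range_swap:
  fixes a K :: nat and h :: "nat \<Rightarrow> rat"
  shows "(\<Sum>j\<in>{0..<a}. if j \<le> K then h j else 0) = (\<Sum>j=0..K. if j < a then h j else 0)"
proof -
  have "(\<Sum>j\<in>{0..<a}. if j \<le> K then h j else 0) = sum h {j \<in> {0..<a}. j \<le> K}"
    using sum.inter_filter[of "{0..<a}" h "\<lambda>j. j \<le> K"] by simp
  also have "{j \<in> {0..<a}. j \<le> K} = {j \<in> {0..K}. j < a}" by auto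
  also have "sum h \<dots> = (\<Sum>j=0..K. if j < a then h j else 0)"
    using sum.inter_filter[of "{0..K}" h "\<lambda>j. j < a"] by simp
  finally show ?thesis .
qed

lemma lt_iff:
  fixes p v i s :: nat
  assumes "v < p" shows "(v + p*i < p ^ Suc s) = (i < p ^ s)"
proof
  assume h: "v + p*i < p ^ Suc s"
  show "i < p ^ s"
  proof (rule ccontr)
    assume "\<not> i < p ^ s"
    then have "p * p ^ s \<le> p * i" by (intro mult_le_mono2) simp
    moreover have "v + p*i < p * p ^ s" using h by simp
    ultimately show False by linarith
  qed
next
  assume "i < p ^ s"
  then have "p * Suc i \<le> p * p ^ s" by (intro mult_le_mono2) simp
  then show "v + p*i < p ^ Suc s" using assms by simp
qed

lemma coef_main:
  assumes p: "p \<in> {2,3}"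
  shows "(F * (Ftr p s oo fps_X ^ p) - Ftr p (Suc s) * (F oo fps_X ^ p)) $ n
       = S p s (n div p) 0 (\<lambda>x y. r p (n mod p) x)"
proof -
  have p0: "p > 0" using p by auto
  define v where "v = n mod p"
  define K where "K = n div p"
  have vp: "v < p" unfolding v_def using p0 by simp
  have nK: "n = v + p*K" unfolding v_def K_def by simp
  have d1: "n - p*j = v + p*(K - j)" if "j \<le> K" for j
    using that nK by (simp add: diff_mult_distrib2)
  have T1: "(F * (Ftr p s oo fps_X ^ p)) $ n = (\<Sum>j=0..K. if j < p^s then of_nat (A (v + p*(K - j))) * of_nat (A j) else 0)"
    unfolding mult_compX_nth[OF p0] K_def[symmetric] Ftr_nth F_nth
    by (intro sum.cong refl) (auto simp: d1)
  have "(Ftr p (Suc s) * (F oo fps_X ^ p)) $ n = (\<Sum>j=0..K. if v + p*(K - j) < p ^ Suc s then of_nat (A (v + p*(K - j))) * of_nat (A j) else 0)"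
    unfolding mult_compX_nth[OF p0] K_def[symmetric] Ftr_nth F_nth
    by (intro sum.cong refl) (auto simp: d1)
  also have "\<dots> = (\<Sum>i=0..K. if v + p*(K - (K + 0 - i)) < p ^ Suc s then of_nat (A (v + p*(K - (K + 0 - i)))) * of_nat (A (K + 0 - i)) else 0)"
    by (rule sum.atLeastAtMost_rev)
  also have "\<dots> = (\<Sum>i=0..K. if i < p ^ s then of_nat (A (v + p*i)) * of_nat (A (K - i)) else 0)"
  proof (intro sum.cong refl)
    fix i assume "i \<in> {0..K}"
    then have "K - (K + 0 - i) = i" by simp
    then show "(if v + p*(K - (K + 0 - i)) < p ^ Suc s then of_nat (A (v + p*(K - (K + 0 - i)))) * of_nat (A (K + 0 - i)) else 0)
      = (if i < p ^ s then of_nat (A (v + p*i)) * (of_nat (A (K - i)) :: rat) else 0)"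
      using lt_iff[OF vp, of i s] by simp
  qed
  finally have T2: "(Ftr p (Suc s) * (F oo fps_X ^ p)) $ n = \<dots>" .
  have "S p s K 0 (\<lambda>x y. r p v x) = (\<Sum>j\<in>{0..<p^s}. if j \<le> K then of_nat (A (K-j)) * of_nat (A j) * (r p v (K-j) - r p v j) else 0)"
    unfolding S_def by simp
  also have "\<dots> = (\<Sum>j=0..K. if j < p^s then of_nat (A (K-j)) * of_nat (A j) * (r p v (K-j) - r p v j) else 0)"
    by (rule range_swap)
  also have "\<dots> = (\<Sum>j=0..K. (if j < p^s then of_nat (A (v + p*(K - j))) * of_nat (A j) else 0)
       - (if j < p ^ s then of_nat (A (v + p*j)) * of_nat (A (K - j)) else 0))"
  proof (intro sum.cong refl)
    fix j
    have "(of_nat (A (v + p*(K - j))) :: rat) = of_nat (A (K - j)) * r p v (K - j)" by (rule rA[OF p vp])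
    moreover have "(of_nat (A (v + p*j)) :: rat) = of_nat (A j) * r p v j" by (rule rA[OF p vp])
    ultimately show "(if j < p^s then of_nat (A (K-j)) * of_nat (A j) * (r p v (K-j) - r p v j) else 0) =
      (if j < p^s then of_nat (A (v + p*(K - j))) * of_nat (A j) else 0)
       - (if j < p ^ s then of_nat (A (v + p*j)) * of_nat (A (K - j)) else 0)"
      by (simp add: algebra_simps)
  qed
  also have "\<dots> = (F * (Ftr p s oo fps_X ^ p)) $ n - (Ftr p (Suc s) * (F oo fps_X ^ p)) $ n"
    unfolding T1 T2 sum_subtractf ..
  finally show ?thesis unfolding v_def K_def by simp
qed

lemma star_cong:
  assumes p: "p \<in> {2,3}"
  shows "fps_cong (int p ^ Suc s) (F * (Ftr p s oo fps_X ^ p)) (Ftr p (Suc s) * (F oo fps_X ^ p))"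
  unfolding fps_cong_def
proof
  fix k
  have p0: "p > 0" using p by auto
  let ?D = "F * (Ftr p s oo fps_X ^ p) - Ftr p (Suc s) * (F oo fps_X ^ p)"
  have "fint ?D" by (intro fint_diff fint_mult fint_F fint_Ftr fint_compX p0)
  then obtain z where z: "?D $ k = of_int z" unfolding fint_def by (metis Ints_cases)
  have "wclass p (\<lambda>x y. r p (k mod p) x)" using p0 by (intro wc_fst w1_r p) simp
  from dwork[OF p this] have "pc p (Suc s) (S p s (k div p) 0 (\<lambda>x y. r p (k mod p) x))" .
  then have "pc p (Suc s) (of_int z)" using coef_main[OF p, of s k] z by simp
  from pc_int_dvd[OF this p0] obtain c where "z = int p ^ Suc s * c" by blast
  then show "\<exists>c. ?D $ k = of_int (int p ^ Suc s * c)" using z by blast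
qed


definition cgm :: "int \<Rightarrow> rat fps \<Rightarrow> rat fps \<Rightarrow> bool" where
  "cgm M f g \<longleftrightarrow> (\<exists>h. fint h \<and> f - g = fps_const (of_int M) * h)"

lemma cgm_cong: assumes "cgm M f g" shows "fps_cong M f g"
proof -
  obtain h where h: "fint h" "f - g = fps_const (of_int M) * h" using assms unfolding cgm_def by blast
  show ?thesis unfolding fps_cong_def
  proof
    fix k
    obtain c where c: "h $ k = of_int c" using h(1) unfolding fint_def by (metis Ints_cases)
    have "(f - g) $ k = of_int (M * c)" unfolding h(2) using c by simp
    then show "\<exists>c. (f - g) $ k = of_int (M * c)" by blast
  qed
qed

lemma cong_cgm: assumes "fps_cong M f g" "M \<noteq> 0" shows "cgm M f g"
proof -
  define h where "h = Abs_fps (\<lambda>k. (f - g) $ k / of_int M)"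
  have "fint h" unfolding fint_def h_def
  proof
    fix k
    obtain c where "(f - g) $ k = of_int (M * c)" using assms(1) unfolding fps_cong_def by blast
    then show "Abs_fps (\<lambda>k. (f - g) $ k / of_int M) $ k \<in> \<int>" using assms(2) by simp
  qed
  moreover have "f - g = fps_const (of_int M) * h"
    by (rule fps_ext) (simp add: h_def assms(2))
  ultimately show ?thesis unfolding cgm_def by blast
qed

lemma inv_one: "(g :: rat fps) $ 0 \<noteq> 0 \<Longrightarrow> g * inverse g = 1"
  by (rule inverse_mult_eq_1')

lemma quot_identity:
  fixes F1 G1 F2 G2 I1 I2 :: "rat fps"
  assumes "G1 * I1 = 1" "G2 * I2 = 1"
  shows "F1 * I1 - F2 * I2 = (F1 * G2 - F2 * G1) * (I1 * I2)"
proof -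
  have "(F1 * G2 - F2 * G1) * (I1 * I2) = F1 * I1 * (G2 * I2) - F2 * I2 * (G1 * I1)"
    by (simp add: algebra_simps)
  then show ?thesis using assms by simp
qed

lemma Xp0: "p > 0 \<Longrightarrow> (fps_X ^ p :: rat fps) $ 0 = 0" by simp

lemma part1:
  assumes p: "p \<in> {2,3}"
  shows "fps_cong (int p ^ (s+1)) (F / fps_compose F (fps_X ^ p)) (Ftr p (s+1) / fps_compose (Ftr p s) (fps_X ^ p))"
proof -
  have p0: "p > 0" using p by auto
  let ?Fp = "F oo fps_X ^ p" and ?Fsp = "Ftr p s oo fps_X ^ p"
  have Fp0: "?Fp $ 0 = 1" by (simp add: F0)
  have Fsp0: "?Fsp $ 0 = 1" using Ftr0[OF p0] by simp
  obtain h where h: "fint h" "F * ?Fsp - Ftr p (Suc s) * ?Fp = fps_const (of_int (int p ^ Suc s)) * h"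
    using cong_cgm[OF star_cong[OF p, of s]] p0 unfolding cgm_def by auto
  have "F / ?Fp - Ftr p (s+1) / ?Fsp = F * inverse ?Fp - Ftr p (Suc s) * inverse ?Fsp"
    using Fp0 Fsp0 by (simp add: fps_divide_unit)
  also have "\<dots> = (F * ?Fsp - Ftr p (Suc s) * ?Fp) * (inverse ?Fp * inverse ?Fsp)"
    by (rule quot_identity) (use Fp0 Fsp0 inv_one in auto)
  also have "\<dots> = fps_const (of_int (int p ^ Suc s)) * (h * (inverse ?Fp * inverse ?Fsp))"
    unfolding h(2) by (simp add: mult.assoc)
  finally have "F / ?Fp - Ftr p (s+1) / ?Fsp = fps_const (of_int (int p ^ (s+1))) * (h * (inverse ?Fp * inverse ?Fsp))" by simp
  moreover have "fint (h * (inverse ?Fp * inverse ?Fsp))"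
    using h(1) Fp0 Fsp0 p0
    by (intro fint_mult fint_inverse fint_compX fint_F fint_Ftr) auto
  ultimately show ?thesis by (intro cgm_cong) (auto simp: cgm_def)
qed


lemma Kstep:
  assumes p: "p \<in> {2,3}"
  shows "\<exists>h. fint h \<and> F * inverse (Ftr p (Suc t)) - ((F * inverse (Ftr p t)) oo fps_X ^ p)
           = fps_const (of_int (int p ^ Suc t)) * h"
proof -
  have p0: "p > 0" using p by auto
  let ?Fp = "F oo fps_X ^ p" and ?Ftp = "Ftr p t oo fps_X ^ p" and ?IFt = "inverse (Ftr p t) oo fps_X ^ p"
  have c: "(F * inverse (Ftr p t)) oo fps_X ^ p = ?Fp * ?IFt"
    by (rule fps_compose_mult_distrib) (simp add: p0)
  have i1: "?Ftp * ?IFt = 1"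
  proof -
    have "?Ftp * ?IFt = (Ftr p t * inverse (Ftr p t)) oo fps_X ^ p"
      by (rule fps_compose_mult_distrib[symmetric]) (simp add: p0)
    also have "Ftr p t * inverse (Ftr p t) = 1" using Ftr0[OF p0] by (intro inv_one) simp
    finally show ?thesis by simp
  qed
  have i2: "Ftr p (Suc t) * inverse (Ftr p (Suc t)) = 1" using Ftr0[OF p0] by (intro inv_one) simp
  obtain h where h: "fint h" "F * ?Ftp - Ftr p (Suc t) * ?Fp = fps_const (of_int (int p ^ Suc t)) * h"
    using cong_cgm[OF star_cong[OF p, of t]] p0 unfolding cgm_def by auto
  have "F * inverse (Ftr p (Suc t)) - ((F * inverse (Ftr p t)) oo fps_X ^ p)
      = F * inverse (Ftr p (Suc t)) - ?Fp * ?IFt" unfolding c ..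
  also have "\<dots> = (F * ?Ftp - ?Fp * Ftr p (Suc t)) * (inverse (Ftr p (Suc t)) * ?IFt)"
    by (rule quot_identity) (use i1 i2 in auto)
  also have "\<dots> = fps_const (of_int (int p ^ Suc t)) * (h * (inverse (Ftr p (Suc t)) * ?IFt))"
    using h(2) by (simp add: mult.commute mult.left_commute mult.assoc)
  finally have e: "F * inverse (Ftr p (Suc t)) - ((F * inverse (Ftr p t)) oo fps_X ^ p)
      = fps_const (of_int (int p ^ Suc t)) * (h * (inverse (Ftr p (Suc t)) * ?IFt))" .
  have "fint (h * (inverse (Ftr p (Suc t)) * ?IFt))"
    using h(1) Ftr0[OF p0] p0
    by (intro fint_mult fint_inverse fint_compX fint_Ftr) auto
  with e show ?thesis by blast
qed

lemma Kderiv: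
  assumes p: "p \<in> {2,3}"
  shows "\<exists>g. fint g \<and> fps_deriv (F * inverse (Ftr p t)) = fps_const (of_int (int p ^ t)) * g"
proof (induction t)
  case 0
  show ?case using fint_deriv[OF fint_F] by (intro exI[of _ "fps_deriv F"]) (simp add: Ftr_zero)
next
  case (Suc t)
  have p0: "p > 0" using p by auto
  obtain g where g: "fint g" "fps_deriv (F * inverse (Ftr p t)) = fps_const (of_int (int p ^ t)) * g"
    using Suc by blast
  obtain h where h: "fint h" "F * inverse (Ftr p (Suc t)) - ((F * inverse (Ftr p t)) oo fps_X ^ p)
           = fps_const (of_int (int p ^ Suc t)) * h" using Kstep[OF p] by blast
  let ?K = "F * inverse (Ftr p t)"
  have K1: "F * inverse (Ftr p (Suc t)) = (?K oo fps_X ^ p) + fps_const (of_int (int p ^ Suc t)) * h"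
    using h(2) by (simp add: algebra_simps)
  have dX: "fps_deriv (fps_X ^ p :: rat fps) = fps_const (of_nat p) * fps_X ^ (p - 1)"
    by (simp add: fps_deriv_power)
  have "fps_deriv (?K oo fps_X ^ p) = (fps_deriv ?K oo fps_X ^ p) * fps_deriv (fps_X ^ p)"
    by (rule fps_compose_deriv) (simp add: p0)
  also have "fps_deriv ?K oo fps_X ^ p = fps_const (of_int (int p ^ t)) * (g oo fps_X ^ p)"
    unfolding g(2) by (subst fps_compose_mult_distrib) (simp_all add: p0)
  finally have dK: "fps_deriv (?K oo fps_X ^ p) = fps_const (of_int (int p ^ t)) * (g oo fps_X ^ p) * (fps_const (of_nat p) * fps_X ^ (p - 1))"
    unfolding dX .
  have "fps_deriv (F * inverse (Ftr p (Suc t))) = fps_const (of_int (int p ^ Suc t)) * ((g oo fps_X ^ p) * fps_X ^ (p - 1) + fps_deriv h)"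
  proof -
    have "fps_deriv (F * inverse (Ftr p (Suc t))) = fps_deriv (?K oo fps_X ^ p) + fps_const (of_int (int p ^ Suc t)) * fps_deriv h"
      unfolding K1 by simp
    also have "\<dots> = (fps_const (of_int (int p ^ t)) * fps_const (of_nat p)) * ((g oo fps_X ^ p) * fps_X ^ (p - 1)) + fps_const (of_int (int p ^ Suc t)) * fps_deriv h"
      unfolding dK by (simp add: mult_ac)
    also have "fps_const (of_int (int p ^ t)) * fps_const (of_nat p) = (fps_const (of_int (int p ^ Suc t)) :: rat fps)"
      by (simp add: mult.commute)
    finally show ?thesis by (simp add: algebra_simps)
  qed
  moreover have "fint ((g oo fps_X ^ p) * fps_X ^ (p - 1) + fps_deriv h)"
    using g(1) h(1) p0 by (intro fint_add fint_mult fint_compX fint_X fint_deriv)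
  ultimately show ?case by blast
qed

lemma part2:
  assumes p: "p \<in> {2,3}"
  shows "fps_cong (int p ^ (s+1)) ((fps_deriv ^^ n) F / F) ((fps_deriv ^^ n) (Ftr p (s+1)) / Ftr p (s+1))"
proof -
  have p0: "p > 0" using p by auto
  define M where "M = (fps_const (of_int (int p ^ Suc s)) :: rat fps)"
  define G where "G = Ftr p (Suc s)"
  define K where "K = F * inverse G"
  have G0: "G $ 0 = 1" unfolding G_def using Ftr0[OF p0] by simp
  have GK: "G * K = F" unfolding K_def using inv_one[of G] G0 by (simp add: mult.commute mult.left_commute)
  have K0: "K $ 0 = 1" unfolding K_def using G0 F0 by simp
  obtain g where g: "fint g" "fps_deriv K = M * g" using Kderiv[OF p, of "Suc s"] unfolding K_def G_def M_def by blast
  have D: "\<exists>h. fint h \<and> (fps_deriv ^^ k) F = K * (fps_deriv ^^ k) G + M * h" for k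
  proof (induction k)
    case 0 show ?case using GK fint_0 by (intro exI[of _ 0]) (simp add: mult.commute)
  next
    case (Suc k)
    then obtain h where h: "fint h" "(fps_deriv ^^ k) F = K * (fps_deriv ^^ k) G + M * h" by blast
    have "(fps_deriv ^^ Suc k) F = fps_deriv (K * (fps_deriv ^^ k) G + M * h)" using h(2) by simp
    also have "\<dots> = K * (fps_deriv ^^ Suc k) G + M * (g * (fps_deriv ^^ k) G + fps_deriv h)"
      unfolding M_def by (simp add: g(2)[unfolded M_def] algebra_simps)
    finally have "(fps_deriv ^^ Suc k) F = K * (fps_deriv ^^ Suc k) G + M * (g * (fps_deriv ^^ k) G + fps_deriv h)" .
    moreover have "fint (g * (fps_deriv ^^ k) G + fps_deriv h)"
      using g(1) h(1) unfolding G_def by (intro fint_add fint_mult fint_derivs fint_Ftr fint_deriv)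
    ultimately show ?case by blast
  qed
  obtain h where h: "fint h" "(fps_deriv ^^ n) F = K * (fps_deriv ^^ n) G + M * h" using D by blast
  have iF: "inverse F = inverse G * inverse K" unfolding GK[symmetric] by (simp add: fps_inverse_mult)
  have KiK: "K * inverse K = 1" using K0 by (intro inv_one) simp
  have "(fps_deriv ^^ n) F / F - (fps_deriv ^^ n) G / G = (fps_deriv ^^ n) F * inverse F - (fps_deriv ^^ n) G * inverse G"
    using F0 G0 by (simp add: fps_divide_unit)
  also have "\<dots> = (fps_deriv ^^ n) G * inverse G * (K * inverse K) + M * (h * inverse F) - (fps_deriv ^^ n) G * inverse G"
    unfolding h(2) iF by (simp add: algebra_simps)
  also have "\<dots> = M * (h * inverse F)" unfolding KiK by simp
  finally have e: "(fps_deriv ^^ n) F / F - (fps_deriv ^^ n) G / G = M * (h * inverse F)" .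
  have "fint (h * inverse F)" using h(1) F0 by (intro fint_mult fint_inverse fint_F) auto
  then have "cgm (int p ^ (s+1)) ((fps_deriv ^^ n) F / F) ((fps_deriv ^^ n) G / G)"
    unfolding cgm_def using e M_def by auto
  then show ?thesis unfolding G_def by (simp add: cgm_cong)
qed

theorem lemma3p6:
  fixes p s n :: nat
  assumes "p \<in> {2, 3}"
  shows "fps_cong (int p ^ (s+1))
           (F / fps_compose F (fps_X ^ p))
           (Ftr p (s+1) / fps_compose (Ftr p s) (fps_X ^ p))
       \<and> fps_cong (int p ^ (s+1))
           ((fps_deriv ^^ n) F / F)
           ((fps_deriv ^^ n) (Ftr p (s+1)) / Ftr p (s+1))"
  using part1[OF assms] part2[OF assms] by blast

end
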